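(* Let $d\ge 2$. If the graph of a stacked $(d+1)$-polytope is $d$-ball packable, then its $d$-ball packing is Apollonian, and it is unique up to Möbius transformations and reflections.
   Context: A simplicial polytope is stacked if it is obtained from a simplex by repeatedly gluing a new simplex onto a facet. A $d$-ball in $\hat{\mathbb R}^d$ is a closed ball, closed exterior of an open ball with $\infty$, or a closed half-space with $\infty$; a $d$-ball packing is a collection of $d$-balls with disjoint interiors; its tangency graph joins balls meeting in exactly one point; a graph is $d$-ball packable if isomorphic to the tangency graph of some $d$-ball packing. A Descartes configuration in dimension $d$ is a set of $d+2$ pairwise tangent $d$-balls with disjoint interiors. A collection of $d$-balls is Apollonian if it can be built from a Descartes configuration by repeatedly adding, for some $d+1$ pairwise tangent balls already present, a new ball tangent to all of them. *)

theory Defs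
  imports "HOL-Analysis.Analysis"
begin

text \<open>Points of the one-point compactification of R^d are represented as
  (real^'n) option, with None standing for the point at infinity.
  d = CARD('n).\<close>

datatype 'n dball =
    Ball "real^'n" real
  | CoBall "real^'n" real
  | Half "real^'n" real

fun dball_wf :: "('n::finite) dball \<Rightarrow> bool" where
  "dball_wf (Ball c r) = (r > 0)"
| "dball_wf (CoBall c r) = (r > 0)"
| "dball_wf (Half u a) = (u \<noteq> 0)"

fun dset :: "('n::finite) dball \<Rightarrow> (real^'n) option set" where
  "dset (Ball c r) = Some ` cball c r"
| "dset (CoBall c r) = insert None (Some ` (- ball c r))"
| "dset (Half u a) = insert None (Some ` {x. u \<bullet> x \<le> a})"

fun dint :: "('n::finite) dball \<Rightarrow> (real^'n) option set" where
  "dint (Ball c r) = Some ` ball c r"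
| "dint (CoBall c r) = insert None (Some ` (- cball c r))"
| "dint (Half u a) = Some ` {x. u \<bullet> x < a}"

definition tangent :: "('n::finite) dball \<Rightarrow> 'n dball \<Rightarrow> bool" where
  "tangent b1 b2 \<longleftrightarrow> (\<exists>p. dset b1 \<inter> dset b2 = {p})"

definition packing :: "'v set \<Rightarrow> ('v \<Rightarrow> ('n::finite) dball) \<Rightarrow> bool" where
  "packing V B \<longleftrightarrow> (\<forall>v\<in>V. dball_wf (B v)) \<and>
     (\<forall>u\<in>V. \<forall>v\<in>V. u \<noteq> v \<longrightarrow> dint (B u) \<inter> dint (B v) = {})"

definition tangency_graph_is :: "'v set \<Rightarrow> ('v \<Rightarrow> 'v \<Rightarrow> bool) \<Rightarrow> ('v \<Rightarrow> ('n::finite) dball) \<Rightarrow> bool" where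
  "tangency_graph_is V E B \<longleftrightarrow>
     (\<forall>u\<in>V. \<forall>v\<in>V. u \<noteq> v \<longrightarrow> (E u v \<longleftrightarrow> tangent (B u) (B v)))"

definition descartes :: "nat \<Rightarrow> ('n::finite) dball set \<Rightarrow> bool" where
  "descartes d S \<longleftrightarrow> finite S \<and> card S = d + 2 \<and> (\<forall>b\<in>S. dball_wf b) \<and>
     (\<forall>b1\<in>S. \<forall>b2\<in>S. b1 \<noteq> b2 \<longrightarrow> tangent b1 b2 \<and> dint b1 \<inter> dint b2 = {})"

inductive apollonian :: "nat \<Rightarrow> ('n::finite) dball set \<Rightarrow> bool" for d where
  apoll_base: "descartes d S \<Longrightarrow> apollonian d S"
| apoll_step: "\<lbrakk> apollonian d S; T \<subseteq> S; card T = d + 1;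
      \<forall>t1\<in>T. \<forall>t2\<in>T. t1 \<noteq> t2 \<longrightarrow> tangent t1 t2;
      dball_wf b; b \<notin> S; \<forall>t\<in>T. tangent b t \<rbrakk> \<Longrightarrow> apollonian d (insert b S)"

fun sphere_inversion :: "real^'n \<Rightarrow> real \<Rightarrow> (real^'n) option \<Rightarrow> (real^'n) option" where
  "sphere_inversion c r None = Some c"
| "sphere_inversion c r (Some x) =
     (if x = c then None else Some (c + (r\<^sup>2 / (norm (x - c))\<^sup>2) *\<^sub>R (x - c)))"

fun hyperplane_reflection :: "real^'n \<Rightarrow> real \<Rightarrow> (real^'n) option \<Rightarrow> (real^'n) option" where
  "hyperplane_reflection u a None = None"
| "hyperplane_reflection u a (Some x) = Some (x - (2 * (u \<bullet> x - a) / (u \<bullet> u)) *\<^sub>R u)"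

inductive_set moebius :: "((real^('n::finite)) option \<Rightarrow> (real^'n) option) set" where
  moeb_id: "id \<in> moebius"
| moeb_inv: "f \<in> moebius \<Longrightarrow> r > 0 \<Longrightarrow> sphere_inversion c r \<circ> f \<in> moebius"
| moeb_refl: "f \<in> moebius \<Longrightarrow> u \<noteq> 0 \<Longrightarrow> hyperplane_reflection u a \<circ> f \<in> moebius"

text \<open>stacked_graph d V E Fs: (V,E) is the graph of a stacked (d+1)-polytope
  whose facets (as vertex sets) are Fs.\<close>
inductive stacked_graph :: "nat \<Rightarrow> 'v set \<Rightarrow> ('v \<Rightarrow> 'v \<Rightarrow> bool) \<Rightarrow> 'v set set \<Rightarrow> bool"
  for d where
  stack_simplex: "\<lbrakk> finite V; card V = d + 2 \<rbrakk> \<Longrightarrow>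
     stacked_graph d V (\<lambda>x y. x \<in> V \<and> y \<in> V \<and> x \<noteq> y) {F. F \<subseteq> V \<and> card F = d + 1}"
| stack_glue: "\<lbrakk> stacked_graph d V E Fs; F \<in> Fs; w \<notin> V \<rbrakk> \<Longrightarrow>
     stacked_graph d (insert w V)
       (\<lambda>x y. E x y \<or> (x = w \<and> y \<in> F) \<or> (y = w \<and> x \<in> F))
       ((Fs - {F}) \<union> {insert w (F - {u}) | u. u \<in> F})"

definition stacked_polytope_graph :: "nat \<Rightarrow> 'v set \<Rightarrow> ('v \<Rightarrow> 'v \<Rightarrow> bool) \<Rightarrow> bool" where
  "stacked_polytope_graph d V E \<longleftrightarrow> (\<exists>Fs. stacked_graph d V E Fs)"

end

theory Submission
  imports Defs
begin

definition qf :: "real \<Rightarrow> real^'n \<Rightarrow> real \<Rightarrow> real^'n \<Rightarrow> real" where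
  "qf \<alpha> \<beta> \<gamma> x = \<alpha> * (x \<bullet> x) - 2 * (\<beta> \<bullet> x) + \<gamma>"

definition gset :: "real \<Rightarrow> real^'n \<Rightarrow> real \<Rightarrow> (real^'n) option set" where
  "gset \<alpha> \<beta> \<gamma> = Some ` {x. qf \<alpha> \<beta> \<gamma> x \<le> 0} \<union> (if \<alpha> \<le> 0 then {None} else {})"

definition gint :: "real \<Rightarrow> real^'n \<Rightarrow> real \<Rightarrow> (real^'n) option set" where
  "gint \<alpha> \<beta> \<gamma> = Some ` {x. qf \<alpha> \<beta> \<gamma> x < 0} \<union> (if \<alpha> < 0 then {None} else {})"

lemma mem_gset: "Some x \<in> gset \<alpha> \<beta> \<gamma> \<longleftrightarrow> qf \<alpha> \<beta> \<gamma> x \<le> 0" "None \<in> gset \<alpha> \<beta> \<gamma> \<longleftrightarrow> \<alpha> \<le> 0"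
  by (auto simp: gset_def)
lemma mem_gint: "Some x \<in> gint \<alpha> \<beta> \<gamma> \<longleftrightarrow> qf \<alpha> \<beta> \<gamma> x < 0" "None \<in> gint \<alpha> \<beta> \<gamma> \<longleftrightarrow> \<alpha> < 0"
  by (auto simp: gint_def)

lemma sq_le_iff: "0 \<le> (a::real) \<Longrightarrow> 0 \<le> b \<Longrightarrow> a\<^sup>2 \<le> b\<^sup>2 \<longleftrightarrow> a \<le> b"
  by (simp add: power_mono_iff)
lemma sq_less_iff: "0 \<le> (a::real) \<Longrightarrow> 0 \<le> b \<Longrightarrow> a\<^sup>2 < b\<^sup>2 \<longleftrightarrow> a < b"
  by (meson not_le sq_le_iff)

lemma qf_ball: "qf 1 c (c \<bullet> c - r\<^sup>2) x = (norm (x - c))\<^sup>2 - r\<^sup>2"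
  by (simp add: qf_def power2_norm_eq_inner algebra_simps inner_commute)

lemma rep_ball:
  assumes "dball_wf (b::'n::finite dball)"
  shows "\<exists>\<alpha> \<beta> \<gamma>. \<beta> \<bullet> \<beta> > \<alpha> * \<gamma> \<and> dset b = gset \<alpha> \<beta> \<gamma> \<and> dint b = gint \<alpha> \<beta> \<gamma>"
proof (cases b)
  case (Ball c r)
  have r: "r > 0" using assms Ball by simp
  have q: "\<And>x. qf 1 c (c \<bullet> c - r\<^sup>2) x = (norm (x - c))\<^sup>2 - r\<^sup>2" by (rule qf_ball)
  have "dset b = gset 1 c (c \<bullet> c - r\<^sup>2)"
    unfolding gset_def Ball using r q
    by (auto simp: dist_norm norm_minus_commute sq_le_iff)
  moreover have "dint b = gint 1 c (c \<bullet> c - r\<^sup>2)"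
    unfolding gint_def Ball using r q
    by (auto simp: dist_norm norm_minus_commute sq_less_iff)
  moreover have "c \<bullet> c > 1 * (c \<bullet> c - r\<^sup>2)" using r by simp
  ultimately show ?thesis by blast
next
  case (CoBall c r)
  have r: "r > 0" using assms CoBall by simp
  have q: "\<And>x. qf (-1) (-c) (-(c \<bullet> c - r\<^sup>2)) x = r\<^sup>2 - (norm (x - c))\<^sup>2"
    by (simp add: qf_def power2_norm_eq_inner algebra_simps inner_commute)
  have "dset b = gset (-1) (-c) (-(c \<bullet> c - r\<^sup>2))"
    unfolding gset_def CoBall using r q
    by (auto simp: dist_norm norm_minus_commute sq_le_iff)
  moreover have "dint b = gint (-1) (-c) (-(c \<bullet> c - r\<^sup>2))"
    unfolding gint_def CoBall using r q
    by (auto simp: dist_norm norm_minus_commute sq_less_iff)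
  moreover have "(-c) \<bullet> (-c) > (-1) * (-(c \<bullet> c - r\<^sup>2))" using r by simp
  ultimately show ?thesis by blast
next
  case (Half u a)
  have u: "u \<noteq> 0" using assms Half by simp
  have q: "\<And>x. qf 0 (-(1/2) *\<^sub>R u) (-a) x = u \<bullet> x - a" by (simp add: qf_def)
  have "dset b = gset 0 (-(1/2) *\<^sub>R u) (-a)" unfolding gset_def Half using q by auto
  moreover have "dint b = gint 0 (-(1/2) *\<^sub>R u) (-a)" unfolding gint_def Half using q by auto
  moreover have "(-(1/2) *\<^sub>R u) \<bullet> (-(1/2) *\<^sub>R u) > 0 * (-a)" using u by simp
  ultimately show ?thesis by blast
qed

lemma qf_complete:
  assumes "\<alpha> \<noteq> 0" and that: "\<beta> \<bullet> \<beta> \<ge> \<alpha> * \<gamma>"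
  shows "qf \<alpha> \<beta> \<gamma> x = \<alpha> * ((norm (x - (1/\<alpha>) *\<^sub>R \<beta>))\<^sup>2 - (sqrt (\<beta> \<bullet> \<beta> - \<alpha> * \<gamma>) / \<bar>\<alpha>\<bar>)\<^sup>2)"
proof -
  have "(sqrt (\<beta> \<bullet> \<beta> - \<alpha> * \<gamma>) / \<bar>\<alpha>\<bar>)\<^sup>2 = (\<beta> \<bullet> \<beta> - \<alpha> * \<gamma>) / \<alpha>\<^sup>2"
    using that by (simp add: power_divide)
  moreover have "(norm (x - (1/\<alpha>) *\<^sub>R \<beta>))\<^sup>2 = x \<bullet> x - 2*(\<beta> \<bullet> x)/\<alpha> + (\<beta> \<bullet> \<beta>)/\<alpha>\<^sup>2"
    using assms by (simp only: power2_norm_eq_inner) (simp add: inner_diff_left inner_diff_right inner_commute field_simps power2_eq_square)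
  ultimately show ?thesis using assms
    by (simp only: qf_def) (simp add: field_simps power2_eq_square)
qed

lemma abs_ball:
  assumes "\<beta> \<bullet> \<beta> > \<alpha> * \<gamma>"
  shows "\<exists>b::'n::finite dball. dball_wf b \<and> dset b = gset \<alpha> \<beta> \<gamma> \<and> dint b = gint \<alpha> \<beta> \<gamma>"
proof -
  define R where "R = sqrt (\<beta> \<bullet> \<beta> - \<alpha> * \<gamma>) / \<bar>\<alpha>\<bar>"
  define c where "c = (1/\<alpha>) *\<^sub>R \<beta>"
  consider "\<alpha> > 0" | "\<alpha> < 0" | "\<alpha> = 0" by linarith
  then show ?thesis
  proof cases
    case 1
    have R: "R > 0" using assms 1 by (simp add: R_def)
    have q: "\<And>x. qf \<alpha> \<beta> \<gamma> x = \<alpha> * ((norm (x - c))\<^sup>2 - R\<^sup>2)"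
      unfolding R_def c_def using qf_complete[where \<alpha>=\<alpha> and \<beta>=\<beta> and \<gamma>=\<gamma>] 1 assms by simp
    have "dset (Ball c R) = gset \<alpha> \<beta> \<gamma>" using 1 R
      by (auto simp: gset_def q mult_le_0_iff dist_norm norm_minus_commute sq_le_iff)
    moreover have "dint (Ball c R) = gint \<alpha> \<beta> \<gamma>" using 1 R
      by (auto simp: gint_def q mult_less_0_iff dist_norm norm_minus_commute sq_less_iff)
    ultimately show ?thesis using R by (intro exI[of _ "Ball c R"]) simp
  next
    case 2
    have "sqrt (\<beta> \<bullet> \<beta> - \<alpha> * \<gamma>) > 0" using assms by simp
    then have R: "R > 0" using 2 by (simp add: R_def divide_pos_neg)
    have q: "\<And>x. qf \<alpha> \<beta> \<gamma> x = \<alpha> * ((norm (x - c))\<^sup>2 - R\<^sup>2)"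
      unfolding R_def c_def using qf_complete[where \<alpha>=\<alpha> and \<beta>=\<beta> and \<gamma>=\<gamma>] 2 assms by simp
    have "dset (CoBall c R) = gset \<alpha> \<beta> \<gamma>" using 2 R
      by (auto simp: gset_def q mult_le_0_iff dist_norm norm_minus_commute sq_le_iff sq_less_iff)
    moreover have "dint (CoBall c R) = gint \<alpha> \<beta> \<gamma>" using 2 R
      by (auto simp: gint_def q mult_less_0_iff dist_norm norm_minus_commute sq_le_iff sq_less_iff)
    ultimately show ?thesis using R by (intro exI[of _ "CoBall c R"]) simp
  next
    case 3
    have b: "\<beta> \<noteq> 0" using assms 3 by auto
    have q: "\<And>x. qf \<alpha> \<beta> \<gamma> x = (-2 *\<^sub>R \<beta>) \<bullet> x - (-\<gamma>)" using 3 by (simp add: qf_def)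
    have "dset (Half (-2 *\<^sub>R \<beta>) (-\<gamma>)) = gset \<alpha> \<beta> \<gamma>" using 3
      by (auto simp: gset_def qf_def)
    moreover have "dint (Half (-2 *\<^sub>R \<beta>) (-\<gamma>)) = gint \<alpha> \<beta> \<gamma>" using 3
      by (auto simp: gint_def qf_def)
    ultimately show ?thesis using b by (intro exI[of _ "Half (-2 *\<^sub>R \<beta>) (-\<gamma>)"]) simp
  qed
qed

lemma qf_shift: "qf \<alpha> \<beta> \<gamma> x = \<alpha> * ((x - c) \<bullet> (x - c)) - 2 * ((\<beta> - \<alpha> *\<^sub>R c) \<bullet> (x - c)) + qf \<alpha> \<beta> \<gamma> c"
  by (simp add: qf_def inner_diff_left inner_diff_right inner_commute algebra_simps)

definition inv\<alpha> :: "real^'n \<Rightarrow> real \<Rightarrow> real \<Rightarrow> real^'n \<Rightarrow> real \<Rightarrow> real" where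
  "inv\<alpha> c r \<alpha> \<beta> \<gamma> = qf \<alpha> \<beta> \<gamma> c"
definition inv\<beta> :: "real^'n \<Rightarrow> real \<Rightarrow> real \<Rightarrow> real^'n \<Rightarrow> real \<Rightarrow> real^'n" where
  "inv\<beta> c r \<alpha> \<beta> \<gamma> = qf \<alpha> \<beta> \<gamma> c *\<^sub>R c + r\<^sup>2 *\<^sub>R (\<beta> - \<alpha> *\<^sub>R c)"
definition inv\<gamma> :: "real^'n \<Rightarrow> real \<Rightarrow> real \<Rightarrow> real^'n \<Rightarrow> real \<Rightarrow> real" where
  "inv\<gamma> c r \<alpha> \<beta> \<gamma> = qf \<alpha> \<beta> \<gamma> c * (c \<bullet> c) + 2 * r\<^sup>2 * ((\<beta> - \<alpha> *\<^sub>R c) \<bullet> c) + r^4 * \<alpha>"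

lemma qf_inv_gen: "qf (inv\<alpha> c r \<alpha> \<beta> \<gamma>) (inv\<beta> c r \<alpha> \<beta> \<gamma>) (inv\<gamma> c r \<alpha> \<beta> \<gamma>) y =
   qf \<alpha> \<beta> \<gamma> c * ((y - c) \<bullet> (y - c)) - 2 * r\<^sup>2 * ((\<beta> - \<alpha> *\<^sub>R c) \<bullet> (y - c)) + r^4 * \<alpha>"
  unfolding inv\<alpha>_def inv\<beta>_def inv\<gamma>_def qf_def[of _ _ _ y]
  by (simp add: inner_diff_left inner_diff_right inner_add_left inner_add_right inner_commute algebra_simps)

lemma qf_inv_at_c: "qf (inv\<alpha> c r \<alpha> \<beta> \<gamma>) (inv\<beta> c r \<alpha> \<beta> \<gamma>) (inv\<gamma> c r \<alpha> \<beta> \<gamma>) c = r^4 * \<alpha>"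
  by (simp add: qf_inv_gen)

lemma qf_inv_pt:
  assumes "x \<noteq> c"
  shows "qf (inv\<alpha> c r \<alpha> \<beta> \<gamma>) (inv\<beta> c r \<alpha> \<beta> \<gamma>) (inv\<gamma> c r \<alpha> \<beta> \<gamma>)
     (c + (r\<^sup>2 / (norm (x - c))\<^sup>2) *\<^sub>R (x - c)) = r^4 * qf \<alpha> \<beta> \<gamma> x / ((x - c) \<bullet> (x - c))"
proof -
  define X where "X = x - c"
  define n where "n = X \<bullet> X"
  have n: "n > 0" using assms by (simp add: n_def X_def)
  have nn: "(norm (x - c))\<^sup>2 = n" by (simp add: n_def X_def power2_norm_eq_inner)
  show ?thesis
    unfolding qf_inv_gen qf_shift[of \<alpha> \<beta> \<gamma> x c] nn
    using n by (simp add: X_def[symmetric] n_def[symmetric] inner_commute field_simps power2_eq_square eval_nat_numeral)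
qed

lemma inv_invol: "sphere_inversion c r (sphere_inversion c r p) = p" if "r > 0"
proof (cases p)
  case None then show ?thesis by simp
next
  case (Some x)
  show ?thesis
  proof (cases "x = c")
    case True then show ?thesis using Some by simp
  next
    case False
    define n where "n = (norm (x - c))\<^sup>2"
    define t where "t = r\<^sup>2 / n"
    have n: "n > 0" using False by (simp add: n_def)
    have t: "t > 0" using n that by (simp add: t_def)
    define y where "y = c + t *\<^sub>R (x - c)"
    have yc: "y - c = t *\<^sub>R (x - c)" by (simp add: y_def)
    have "t *\<^sub>R (x - c) \<noteq> 0" using t False by simp
    then have ync: "y \<noteq> c" using yc by force
    have ny: "(norm (y - c))\<^sup>2 = t\<^sup>2 * n" by (simp add: yc n_def power_mult_distrib)
    have tn: "t * n = r\<^sup>2" using n by (simp add: t_def)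
    have "r\<^sup>2 / (norm (y - c))\<^sup>2 * t = (t * n) / (t\<^sup>2 * n) * t" unfolding ny tn ..
    also have "\<dots> = 1" using t n by (simp add: power2_eq_square)
    finally have "r\<^sup>2 / (norm (y - c))\<^sup>2 * t = 1" .
    moreover have "(r\<^sup>2 / (norm (y - c))\<^sup>2) *\<^sub>R (y - c) = ((r\<^sup>2 / (norm (y - c))\<^sup>2) * t) *\<^sub>R (x - c)"
      by (subst (2) yc) simp
    ultimately have "(r\<^sup>2 / (norm (y - c))\<^sup>2) *\<^sub>R (y - c) = x - c" by (metis scaleR_one)
    then have "c + (r\<^sup>2 / (norm (y - c))\<^sup>2) *\<^sub>R (y - c) = x" by (metis add.commute diff_add_cancel)
    then show ?thesis using Some False ync by (simp add: n_def[symmetric] t_def[symmetric] y_def[symmetric])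
  qed
qed

lemma pos_mult_le0: "(K::real) > 0 \<Longrightarrow> (K * q \<le> 0 \<longleftrightarrow> q \<le> 0) \<and> (K * q < 0 \<longleftrightarrow> q < 0)"
  by (simp add: mult_le_0_iff mult_less_0_iff)

lemma image_invol:
  assumes "\<And>p. f (f p) = p" and "\<And>p. p \<in> A \<longleftrightarrow> f p \<in> A'"
  shows "f ` A = A'"
proof
  show "f ` A \<subseteq> A'" using assms by auto
  show "A' \<subseteq> f ` A"
  proof
    fix y assume "y \<in> A'"
    then have "f y \<in> A" using assms(1) assms(2)[of "f y"] by simp
    then show "y \<in> f ` A" using assms(1)[of y] by (metis image_eqI)
  qed
qed

lemma inv_gset:
  assumes "r > 0"
  shows "sphere_inversion c r ` gset \<alpha> \<beta> \<gamma> = gset (inv\<alpha> c r \<alpha> \<beta> \<gamma>) (inv\<beta> c r \<alpha> \<beta> \<gamma>) (inv\<gamma> c r \<alpha> \<beta> \<gamma>)"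
    and "sphere_inversion c r ` gint \<alpha> \<beta> \<gamma> = gint (inv\<alpha> c r \<alpha> \<beta> \<gamma>) (inv\<beta> c r \<alpha> \<beta> \<gamma>) (inv\<gamma> c r \<alpha> \<beta> \<gamma>)"
proof -
  have r4: "r^4 > 0" using assms by simp
  have key: "\<And>x. x \<noteq> c \<Longrightarrow> (qf (inv\<alpha> c r \<alpha> \<beta> \<gamma>) (inv\<beta> c r \<alpha> \<beta> \<gamma>) (inv\<gamma> c r \<alpha> \<beta> \<gamma>)
     (c + (r\<^sup>2 / (norm (x - c))\<^sup>2) *\<^sub>R (x - c)) \<le> 0 \<longleftrightarrow> qf \<alpha> \<beta> \<gamma> x \<le> 0) \<and>
     (qf (inv\<alpha> c r \<alpha> \<beta> \<gamma>) (inv\<beta> c r \<alpha> \<beta> \<gamma>) (inv\<gamma> c r \<alpha> \<beta> \<gamma>)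
     (c + (r\<^sup>2 / (norm (x - c))\<^sup>2) *\<^sub>R (x - c)) < 0 \<longleftrightarrow> qf \<alpha> \<beta> \<gamma> x < 0)"
  proof -
    fix x :: "real^'a" assume "x \<noteq> c"
    then have n: "(x - c) \<bullet> (x - c) > 0" by simp
    have k: "r^4 / ((x - c) \<bullet> (x - c)) > 0" using n r4 by simp
    have e: "r^4 * qf \<alpha> \<beta> \<gamma> x / ((x - c) \<bullet> (x - c)) = (r^4 / ((x - c) \<bullet> (x - c))) * qf \<alpha> \<beta> \<gamma> x" by simp
    show "?thesis x" unfolding qf_inv_pt[OF \<open>x \<noteq> c\<close>] e using pos_mult_le0[OF k] by blast
  qed
  show "sphere_inversion c r ` gset \<alpha> \<beta> \<gamma> = gset (inv\<alpha> c r \<alpha> \<beta> \<gamma>) (inv\<beta> c r \<alpha> \<beta> \<gamma>) (inv\<gamma> c r \<alpha> \<beta> \<gamma>)"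
  proof (rule image_invol)
    show "\<And>p. sphere_inversion c r (sphere_inversion c r p) = p" using inv_invol assms by blast
    fix p show "p \<in> gset \<alpha> \<beta> \<gamma> \<longleftrightarrow> sphere_inversion c r p \<in> gset (inv\<alpha> c r \<alpha> \<beta> \<gamma>) (inv\<beta> c r \<alpha> \<beta> \<gamma>) (inv\<gamma> c r \<alpha> \<beta> \<gamma>)"
    proof (cases p)
      case None then show ?thesis using r4 by (simp add: mem_gset qf_inv_at_c mult_le_0_iff)
    next
      case (Some x)
      show ?thesis
      proof (cases "x = c")
        case True then show ?thesis using Some by (simp add: mem_gset inv\<alpha>_def)
      next
        case False then show ?thesis using Some key[OF False] by (simp add: mem_gset)
      qed
    qed
  qed
  show "sphere_inversion c r ` gint \<alpha> \<beta> \<gamma> = gint (inv\<alpha> c r \<alpha> \<beta> \<gamma>) (inv\<beta> c r \<alpha> \<beta> \<gamma>) (inv\<gamma> c r \<alpha> \<beta> \<gamma>)"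
  proof (rule image_invol)
    show "\<And>p. sphere_inversion c r (sphere_inversion c r p) = p" using inv_invol assms by blast
    fix p show "p \<in> gint \<alpha> \<beta> \<gamma> \<longleftrightarrow> sphere_inversion c r p \<in> gint (inv\<alpha> c r \<alpha> \<beta> \<gamma>) (inv\<beta> c r \<alpha> \<beta> \<gamma>) (inv\<gamma> c r \<alpha> \<beta> \<gamma>)"
    proof (cases p)
      case None then show ?thesis using r4 by (simp add: mem_gint qf_inv_at_c mult_less_0_iff)
    next
      case (Some x)
      show ?thesis
      proof (cases "x = c")
        case True then show ?thesis using Some by (simp add: mem_gint inv\<alpha>_def)
      next
        case False then show ?thesis using Some key[OF False] by (simp add: mem_gint)
      qed
    qed
  qed
qed

lemma inv_disc:
  "inv\<beta> c r \<alpha> \<beta> \<gamma> \<bullet> inv\<beta> c r \<alpha> \<beta> \<gamma> - inv\<alpha> c r \<alpha> \<beta> \<gamma> * inv\<gamma> c r \<alpha> \<beta> \<gamma> = r^4 * (\<beta> \<bullet> \<beta> - \<alpha> * \<gamma>)"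
  unfolding inv\<alpha>_def inv\<beta>_def inv\<gamma>_def qf_def
  by (simp add: inner_diff_left inner_diff_right inner_add_left inner_add_right inner_commute algebra_simps power2_eq_square eval_nat_numeral)

definition rf\<beta> :: "real^'n \<Rightarrow> real \<Rightarrow> real \<Rightarrow> real^'n \<Rightarrow> real \<Rightarrow> real^'n" where
  "rf\<beta> u a \<alpha> \<beta> \<gamma> = \<alpha> *\<^sub>R ((2 * a / (u \<bullet> u)) *\<^sub>R u) + (\<beta> - (2 * (u \<bullet> \<beta>) / (u \<bullet> u)) *\<^sub>R u)"
definition rf\<gamma> :: "real^'n \<Rightarrow> real \<Rightarrow> real \<Rightarrow> real^'n \<Rightarrow> real \<Rightarrow> real" where
  "rf\<gamma> u a \<alpha> \<beta> \<gamma> = \<alpha> * ((2 * a / (u \<bullet> u))\<^sup>2 * (u \<bullet> u)) - 2 * (\<beta> \<bullet> ((2 * a / (u \<bullet> u)) *\<^sub>R u)) + \<gamma>"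

lemma qf_refl:
  assumes "u \<noteq> 0"
  shows "qf \<alpha> (rf\<beta> u a \<alpha> \<beta> \<gamma>) (rf\<gamma> u a \<alpha> \<beta> \<gamma>) (x - (2 * (u \<bullet> x - a) / (u \<bullet> u)) *\<^sub>R u) = qf \<alpha> \<beta> \<gamma> x"
proof -
  have k: "u \<bullet> u \<noteq> 0" using assms by simp
  show ?thesis unfolding qf_def rf\<beta>_def rf\<gamma>_def using k
    by (simp add: inner_diff_left inner_diff_right inner_add_left inner_add_right inner_commute field_simps power2_eq_square)
qed

lemma refl_invol: "u \<noteq> 0 \<Longrightarrow> hyperplane_reflection u a (hyperplane_reflection u a p) = p"
proof (cases p)
  case None then show ?thesis by simp
next
  case (Some x)
  assume u: "u \<noteq> 0"
  have k: "u \<bullet> u \<noteq> 0" using u by simp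
  define t where "t = 2 * (u \<bullet> x - a) / (u \<bullet> u)"
  define y where "y = x - t *\<^sub>R u"
  have h: "u \<bullet> y - a = -(u \<bullet> x - a)"
    using k by (simp add: y_def t_def inner_diff_right field_simps)
  have "2 * (u \<bullet> y - a) / (u \<bullet> u) = - t" unfolding h t_def by (metis minus_diff_eq minus_divide_right mult_minus_right divide_minus_left)
  then have "y - (2 * (u \<bullet> y - a) / (u \<bullet> u)) *\<^sub>R u = x" by (simp add: y_def)
  then show ?thesis using Some by (simp only: hyperplane_reflection.simps t_def[symmetric] y_def[symmetric])
qed

lemma refl_gset:
  assumes "u \<noteq> 0"
  shows "hyperplane_reflection u a ` gset \<alpha> \<beta> \<gamma> = gset \<alpha> (rf\<beta> u a \<alpha> \<beta> \<gamma>) (rf\<gamma> u a \<alpha> \<beta> \<gamma>)"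
    and "hyperplane_reflection u a ` gint \<alpha> \<beta> \<gamma> = gint \<alpha> (rf\<beta> u a \<alpha> \<beta> \<gamma>) (rf\<gamma> u a \<alpha> \<beta> \<gamma>)"
proof -
  show "hyperplane_reflection u a ` gset \<alpha> \<beta> \<gamma> = gset \<alpha> (rf\<beta> u a \<alpha> \<beta> \<gamma>) (rf\<gamma> u a \<alpha> \<beta> \<gamma>)"
  proof (rule image_invol)
    show "\<And>p. hyperplane_reflection u a (hyperplane_reflection u a p) = p" using refl_invol assms by blast
    fix p show "p \<in> gset \<alpha> \<beta> \<gamma> \<longleftrightarrow> hyperplane_reflection u a p \<in> gset \<alpha> (rf\<beta> u a \<alpha> \<beta> \<gamma>) (rf\<gamma> u a \<alpha> \<beta> \<gamma>)"
      by (cases p) (simp_all only: hyperplane_reflection.simps mem_gset qf_refl[OF assms])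
  qed
  show "hyperplane_reflection u a ` gint \<alpha> \<beta> \<gamma> = gint \<alpha> (rf\<beta> u a \<alpha> \<beta> \<gamma>) (rf\<gamma> u a \<alpha> \<beta> \<gamma>)"
  proof (rule image_invol)
    show "\<And>p. hyperplane_reflection u a (hyperplane_reflection u a p) = p" using refl_invol assms by blast
    fix p show "p \<in> gint \<alpha> \<beta> \<gamma> \<longleftrightarrow> hyperplane_reflection u a p \<in> gint \<alpha> (rf\<beta> u a \<alpha> \<beta> \<gamma>) (rf\<gamma> u a \<alpha> \<beta> \<gamma>)"
      by (cases p) (simp_all only: hyperplane_reflection.simps mem_gint qf_refl[OF assms])
  qed
qed

lemma refl_disc:
  assumes "u \<noteq> 0"
  shows "rf\<beta> u a \<alpha> \<beta> \<gamma> \<bullet> rf\<beta> u a \<alpha> \<beta> \<gamma> - \<alpha> * rf\<gamma> u a \<alpha> \<beta> \<gamma> = \<beta> \<bullet> \<beta> - \<alpha> * \<gamma>"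
proof -
  have k: "u \<bullet> u \<noteq> 0" using assms by simp
  show ?thesis unfolding rf\<beta>_def rf\<gamma>_def using k
    by (simp add: inner_diff_left inner_diff_right inner_add_left inner_add_right inner_commute field_simps power2_eq_square)
qed

lemma moeb_comp: "g \<in> moebius \<Longrightarrow> f \<in> moebius \<Longrightarrow> g \<circ> f \<in> moebius"
proof (induction g rule: moebius.induct)
  case moeb_id then show ?case by simp
next
  case (moeb_inv g r c) then show ?case using moebius.moeb_inv[of "g \<circ> f" r c] by (metis comp_assoc)
next
  case (moeb_refl g u a) then show ?case using moebius.moeb_refl[of "g \<circ> f" u a] by (metis comp_assoc)
qed

lemma moeb_inv1: "r > 0 \<Longrightarrow> sphere_inversion c r \<in> moebius"
  using moebius.moeb_inv[OF moebius.moeb_id] by simp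
lemma moeb_refl1: "u \<noteq> 0 \<Longrightarrow> hyperplane_reflection u a \<in> moebius"
  using moebius.moeb_refl[OF moebius.moeb_id] by simp

lemma moeb_inverse: "f \<in> moebius \<Longrightarrow> \<exists>g\<in>moebius. \<forall>p. g (f p) = p \<and> f (g p) = p"
proof (induction f rule: moebius.induct)
  case moeb_id then show ?case by (intro bexI[of _ id] moebius.moeb_id) simp
next
  case (moeb_inv f r c)
  then obtain g where g: "g \<in> moebius" "\<forall>p. g (f p) = p \<and> f (g p) = p" by blast
  show ?case
    by (rule bexI[of _ "g \<circ> sphere_inversion c r"]) (use g moeb_inv inv_invol in \<open>auto intro: moeb_comp moeb_inv1\<close>)
next
  case (moeb_refl f u a)
  then obtain g where g: "g \<in> moebius" "\<forall>p. g (f p) = p \<and> f (g p) = p" by blast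
  show ?case
    by (rule bexI[of _ "g \<circ> hyperplane_reflection u a"]) (use g moeb_refl refl_invol in \<open>auto intro: moeb_comp moeb_refl1\<close>)
qed

lemma moeb_inj: "f \<in> moebius \<Longrightarrow> inj f"
  using moeb_inverse by (metis injI)

lemma moeb_gs:
  assumes "f \<in> moebius" "\<beta> \<bullet> \<beta> > \<alpha> * \<gamma>"
  shows "\<exists>\<alpha>' \<beta>' \<gamma>'. \<beta>' \<bullet> \<beta>' > \<alpha>' * \<gamma>' \<and> f ` gset \<alpha> \<beta> \<gamma> = gset \<alpha>' \<beta>' \<gamma>' \<and> f ` gint \<alpha> \<beta> \<gamma> = gint \<alpha>' \<beta>' \<gamma>'"
  using assms(1)
proof (induction f rule: moebius.induct)
  case moeb_id then show ?case using assms(2) by auto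
next
  case (moeb_inv f r c)
  then obtain \<alpha>' \<beta>' \<gamma>' where h: "\<beta>' \<bullet> \<beta>' > \<alpha>' * \<gamma>'" "f ` gset \<alpha> \<beta> \<gamma> = gset \<alpha>' \<beta>' \<gamma>'" "f ` gint \<alpha> \<beta> \<gamma> = gint \<alpha>' \<beta>' \<gamma>'" by blast
  have "inv\<beta> c r \<alpha>' \<beta>' \<gamma>' \<bullet> inv\<beta> c r \<alpha>' \<beta>' \<gamma>' - inv\<alpha> c r \<alpha>' \<beta>' \<gamma>' * inv\<gamma> c r \<alpha>' \<beta>' \<gamma>' > 0"
    unfolding inv_disc using h(1) moeb_inv(2) by simp
  moreover have "(sphere_inversion c r \<circ> f) ` gset \<alpha> \<beta> \<gamma> = gset (inv\<alpha> c r \<alpha>' \<beta>' \<gamma>') (inv\<beta> c r \<alpha>' \<beta>' \<gamma>') (inv\<gamma> c r \<alpha>' \<beta>' \<gamma>')"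
    by (metis image_comp h(2) inv_gset(1)[OF moeb_inv(2)])
  moreover have "(sphere_inversion c r \<circ> f) ` gint \<alpha> \<beta> \<gamma> = gint (inv\<alpha> c r \<alpha>' \<beta>' \<gamma>') (inv\<beta> c r \<alpha>' \<beta>' \<gamma>') (inv\<gamma> c r \<alpha>' \<beta>' \<gamma>')"
    by (metis image_comp h(3) inv_gset(2)[OF moeb_inv(2)])
  ultimately show ?case by (intro exI conjI) auto
next
  case (moeb_refl f u a)
  then obtain \<alpha>' \<beta>' \<gamma>' where h: "\<beta>' \<bullet> \<beta>' > \<alpha>' * \<gamma>'" "f ` gset \<alpha> \<beta> \<gamma> = gset \<alpha>' \<beta>' \<gamma>'" "f ` gint \<alpha> \<beta> \<gamma> = gint \<alpha>' \<beta>' \<gamma>'" by blast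
  have "rf\<beta> u a \<alpha>' \<beta>' \<gamma>' \<bullet> rf\<beta> u a \<alpha>' \<beta>' \<gamma>' - \<alpha>' * rf\<gamma> u a \<alpha>' \<beta>' \<gamma>' > 0"
    unfolding refl_disc[OF moeb_refl(2)] using h(1) by simp
  moreover have "(hyperplane_reflection u a \<circ> f) ` gset \<alpha> \<beta> \<gamma> = gset \<alpha>' (rf\<beta> u a \<alpha>' \<beta>' \<gamma>') (rf\<gamma> u a \<alpha>' \<beta>' \<gamma>')"
    by (metis image_comp h(2) refl_gset(1)[OF moeb_refl(2)])
  moreover have "(hyperplane_reflection u a \<circ> f) ` gint \<alpha> \<beta> \<gamma> = gint \<alpha>' (rf\<beta> u a \<alpha>' \<beta>' \<gamma>') (rf\<gamma> u a \<alpha>' \<beta>' \<gamma>')"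
    by (metis image_comp h(3) refl_gset(2)[OF moeb_refl(2)])
  ultimately show ?case by (intro exI conjI) auto
qed

lemma moeb_ball:
  assumes "f \<in> moebius" "dball_wf b"
  shows "\<exists>b'. dball_wf b' \<and> f ` dset b = dset b' \<and> f ` dint b = dint b'"
proof -
  obtain \<alpha> \<beta> \<gamma> where "\<beta> \<bullet> \<beta> > \<alpha> * \<gamma>" "dset b = gset \<alpha> \<beta> \<gamma>" "dint b = gint \<alpha> \<beta> \<gamma>"
    using rep_ball[OF assms(2)] by blast
  with moeb_gs[OF assms(1)] obtain \<alpha>' \<beta>' \<gamma>' where "\<beta>' \<bullet> \<beta>' > \<alpha>' * \<gamma>'"
     "f ` dset b = gset \<alpha>' \<beta>' \<gamma>'" "f ` dint b = gint \<alpha>' \<beta>' \<gamma>'" by metis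
  with abs_ball show ?thesis by metis
qed

lemma orth_span_zero:
  fixes T :: "(real^'n::finite) set"
  assumes "finite T" "independent T" "card T = CARD('n)" "\<forall>t\<in>T. w \<bullet> t = 0"
  shows "w = 0"
proof -
  have "UNIV \<subseteq> span T" using card_ge_dim_independent[of T UNIV] assms by simp
  then have "w \<in> span T" by auto
  then have "orthogonal w w" using orthogonal_to_span[of w T w] assms(4) by (auto simp: orthogonal_def)
  then show ?thesis by (simp add: orthogonal_def)
qed

lemma dist_sq_inner: "(dist x y)\<^sup>2 = (x - y) \<bullet> (x - y)"
  by (simp add: dist_norm power2_norm_eq_inner)

lemma vec_unique:
  fixes u :: "real^'n::finite" and c :: "'i \<Rightarrow> real^'n"
  assumes u: "u \<noteq> 0" and I: "finite I" "card I + 1 = CARD('n)" and \<rho>: "\<rho> > 0"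
    and cc: "\<forall>i\<in>I. \<forall>j\<in>I. i \<noteq> j \<longrightarrow> dist (c i) (c j) = 2 * \<rho>"
    and cu: "\<forall>i\<in>I. u \<bullet> c i = m" and zu: "u \<bullet> z = m" and xu: "u \<bullet> x = m" and yu: "u \<bullet> y = m"
    and zc: "\<forall>i\<in>I. dist z (c i) = 2 * \<rho>" and xc: "\<forall>i\<in>I. dist x (c i) = 2 * \<rho>"
    and yc: "\<forall>i\<in>I. dist y (c i) = 2 * \<rho>"
    and xz: "x \<noteq> z" and yz: "y \<noteq> z"
  shows "x = y"
proof -
  define v where "v i = c i - z" for i
  have vv: "v i \<bullet> v j = (if i = j then 4 * \<rho>\<^sup>2 else 2 * \<rho>\<^sup>2)" if "i \<in> I" "j \<in> I" for i j
  proof -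
    have a: "v i \<bullet> v i = 4 * \<rho>\<^sup>2" using zc that dist_sq_inner[of z "c i"]
      by (simp add: v_def inner_commute power_mult_distrib algebra_simps inner_diff_left inner_diff_right)
    have b: "v j \<bullet> v j = 4 * \<rho>\<^sup>2" using zc that dist_sq_inner[of z "c j"]
      by (simp add: v_def inner_commute power_mult_distrib algebra_simps inner_diff_left inner_diff_right)
    show ?thesis
    proof (cases "i = j")
      case True then show ?thesis using a by simp
    next
      case False
      have "(v i - v j) \<bullet> (v i - v j) = 4 * \<rho>\<^sup>2"
        using cc that False dist_sq_inner[of "c i" "c j"] by (simp add: v_def power_mult_distrib)
      then have "v i \<bullet> v i - 2 * (v i \<bullet> v j) + v j \<bullet> v j = 4 * \<rho>\<^sup>2"
        by (simp add: inner_diff_left inner_diff_right inner_commute)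
      then show ?thesis using a b False by simp
    qed
  qed
  have uv: "u \<bullet> v i = 0" if "i \<in> I" for i using cu zu that by (simp add: v_def inner_diff_right)
  have injv: "inj_on v I"
  proof (rule inj_onI)
    fix i j assume "i \<in> I" "j \<in> I" "v i = v j"
    then have "c i = c j" by (simp add: v_def)
    then show "i = j" using cc \<open>i \<in> I\<close> \<open>j \<in> I\<close> \<rho> by (metis dist_self mult_pos_pos zero_less_numeral less_irrefl)
  qed
  have unv: "u \<notin> v ` I"
  proof
    assume "u \<in> v ` I"
    then obtain i where "i \<in> I" "u = v i" by auto
    then have "u \<bullet> u = 0" using uv by metis
    then show False using u by simp
  qed
  define T where "T = insert u (v ` I)"
  have fT: "finite T" using I by (simp add: T_def)
  have cT: "card T = CARD('n)" using I unv injv by (simp add: T_def card_image)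
  have indT: "independent T"
  proof
    assume "dependent T"
    then obtain lam where l: "\<exists>t\<in>T. lam t \<noteq> 0" "(\<Sum>t\<in>T. lam t *\<^sub>R t) = 0"
      using dependent_finite[OF fT] by blast
    have sumT: "(\<Sum>t\<in>T. lam t *\<^sub>R t) = lam u *\<^sub>R u + (\<Sum>i\<in>I. lam (v i) *\<^sub>R v i)"
      unfolding T_def using I unv injv by (simp add: sum.reindex)
    have "u \<bullet> (\<Sum>t\<in>T. lam t *\<^sub>R t) = lam u * (u \<bullet> u)"
      unfolding sumT by (simp add: inner_add_right inner_sum_right uv)
    then have lu: "lam u = 0" using l(2) u by simp
    define L where "L = (\<Sum>i\<in>I. lam (v i))"
    have lj: "lam (v j) = - L" if j: "j \<in> I" for j
    proof -
      have "v j \<bullet> (\<Sum>t\<in>T. lam t *\<^sub>R t) = (\<Sum>i\<in>I. lam (v i) * (v i \<bullet> v j))"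
        unfolding sumT lu by (simp add: inner_sum_right inner_commute)
      also have "\<dots> = (\<Sum>i\<in>I. lam (v i) * (2 * \<rho>\<^sup>2) + (if i = j then lam (v i) * (2 * \<rho>\<^sup>2) else 0))"
        by (rule sum.cong) (use vv j in auto)
      also have "\<dots> = 2 * \<rho>\<^sup>2 * L + lam (v j) * (2 * \<rho>\<^sup>2)"
        using I j by (simp add: sum.distrib L_def sum_distrib_right[symmetric] mult.commute)
      finally have "2 * \<rho>\<^sup>2 * (L + lam (v j)) = 0" using l(2) by (simp add: algebra_simps)
      then show ?thesis using \<rho> by simp
    qed
    have "L = (\<Sum>i\<in>I. lam (v i))" by (simp add: L_def)
    also have "\<dots> = (\<Sum>i\<in>I. - L)" by (rule sum.cong) (use lj in auto)
    finally have "L = (\<Sum>i\<in>I. - L)" .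
    then have "L = - (real (card I) * L)" by simp
    then have "(real (card I) + 1) * L = 0" by (simp add: algebra_simps)
    then have L0: "L = 0" by (metis add_nonneg_pos of_nat_0_le_iff zero_less_one mult_eq_0_iff less_irrefl)
    have "\<forall>t\<in>T. lam t = 0" using lu lj L0 by (auto simp: T_def)
    then show False using l(1) by blast
  qed
  define wx where "wx = x - z"
  define wy where "wy = y - z"
  have wv: "w \<bullet> v i = (w \<bullet> w) / 2" if "i \<in> I" "w = p - z" "dist p (c i) = 2 * \<rho>" for w p i
  proof -
    have "(w - v i) \<bullet> (w - v i) = 4 * \<rho>\<^sup>2"
      using that dist_sq_inner[of p "c i"] by (simp add: v_def power_mult_distrib)
    then have "w \<bullet> w - 2 * (w \<bullet> v i) + v i \<bullet> v i = 4 * \<rho>\<^sup>2"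
      by (simp add: inner_diff_left inner_diff_right inner_commute)
    then show ?thesis using vv[OF that(1) that(1)] by simp
  qed
  define a where "a = wx \<bullet> wx"
  define b where "b = wy \<bullet> wy"
  have a: "a > 0" using xz by (simp add: a_def wx_def)
  have b: "b > 0" using yz by (simp add: b_def wy_def)
  define W where "W = b *\<^sub>R wx - a *\<^sub>R wy"
  have "\<forall>t\<in>T. W \<bullet> t = 0"
  proof
    fix t assume "t \<in> T"
    then consider "t = u" | i where "i \<in> I" "t = v i" by (auto simp: T_def)
    then show "W \<bullet> t = 0"
    proof cases
      case 1 then show ?thesis using xu yu zu by (simp add: W_def wx_def wy_def inner_diff_left inner_diff_right inner_commute)
    next
      case 2
      have h1: "wx \<bullet> v i = a / 2" using wv[of i wx x] 2 xc by (simp add: wx_def a_def)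
      have h2: "wy \<bullet> v i = b / 2" using wv[of i wy y] 2 yc by (simp add: wy_def b_def)
      show ?thesis unfolding 2 W_def inner_diff_left inner_scaleR_left h1 h2 by simp
    qed
  qed
  then have "W = 0" using orth_span_zero[OF fT indT cT] by blast
  then have e: "b *\<^sub>R wx = a *\<^sub>R wy" by (simp add: W_def)
  then have "(b *\<^sub>R wx) \<bullet> (b *\<^sub>R wx) = (a *\<^sub>R wy) \<bullet> (a *\<^sub>R wy)" by simp
  then have "b * b * a = a * a * b" by (simp add: a_def b_def)
  then have "(a * b) * (b - a) = 0" by (simp add: algebra_simps)
  then have "a = b" using a b by simp
  then have "wx = wy" using e a by simp
  then show ?thesis by (simp add: wx_def wy_def)
qed

lemma half_half:
  fixes u v :: "real^'n::finite"
  assumes u: "u \<noteq> 0" and v: "v \<noteq> 0" and d: "dint (Half u a) \<inter> dint (Half v b) = {}"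
  shows "\<exists>\<mu>>0. v = - \<mu> *\<^sub>R u"
proof (rule ccontr)
  assume nex: "\<not> ?thesis"
  have nu: "norm u > 0" and nv: "norm v > 0" using u v by auto
  have cs: "u \<bullet> v \<ge> - (norm u * norm v)"
    using norm_cauchy_schwarz[of "-u" v] by simp
  have strict: "u \<bullet> v > - (norm u * norm v)"
  proof (rule ccontr)
    assume "\<not> ?thesis"
    then have eq: "u \<bullet> v = - (norm u * norm v)" using cs by simp
    have "(norm u *\<^sub>R v + norm v *\<^sub>R u) \<bullet> (norm u *\<^sub>R v + norm v *\<^sub>R u)
        = (norm u)\<^sup>2 * (v \<bullet> v) + 2 * (norm u * norm v) * (u \<bullet> v) + (norm v)\<^sup>2 * (u \<bullet> u)"
      by (simp add: inner_add_left inner_add_right inner_commute power2_eq_square algebra_simps)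
    also have "\<dots> = 0" unfolding eq by (simp add: power2_norm_eq_inner[symmetric] power2_eq_square algebra_simps)
    finally have "norm u *\<^sub>R v + norm v *\<^sub>R u = 0" by simp
    then have "norm u *\<^sub>R v = - (norm v *\<^sub>R u)" by (simp add: eq_neg_iff_add_eq_0)
    then have "(1 / norm u) *\<^sub>R (norm u *\<^sub>R v) = (1 / norm u) *\<^sub>R (- (norm v *\<^sub>R u))" by simp
    then have "v = - (norm v / norm u) *\<^sub>R u" using nu by simp
    then show False using nex nu nv by (metis divide_pos_pos)
  qed
  define e where "e = (1 / norm u) *\<^sub>R u + (1 / norm v) *\<^sub>R v"
  have ue: "u \<bullet> e > 0"
  proof -
    have "u \<bullet> e = norm u + (u \<bullet> v) / norm v" using nu
      by (simp add: e_def inner_add_right power2_norm_eq_inner[symmetric] power2_eq_square)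
    moreover have "(u \<bullet> v) / norm v > - norm u" using strict nv by (simp add: field_simps)
    ultimately show ?thesis by simp
  qed
  have ve: "v \<bullet> e > 0"
  proof -
    have "v \<bullet> e = (u \<bullet> v) / norm u + norm v" using nv
      by (simp add: e_def inner_add_right inner_commute power2_norm_eq_inner[symmetric] power2_eq_square)
    moreover have "(u \<bullet> v) / norm u > - norm v" using strict nu by (simp add: field_simps)
    ultimately show ?thesis by simp
  qed
  define t where "t = (\<bar>a\<bar> + 1) / (u \<bullet> e) + (\<bar>b\<bar> + 1) / (v \<bullet> e)"
  define x where "x = - t *\<^sub>R e"
  have "t * (u \<bullet> e) \<ge> \<bar>a\<bar> + 1"
  proof -
    have "t * (u \<bullet> e) = \<bar>a\<bar> + 1 + (\<bar>b\<bar> + 1) / (v \<bullet> e) * (u \<bullet> e)" using ue by (simp add: t_def field_simps)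
    moreover have "(\<bar>b\<bar> + 1) / (v \<bullet> e) * (u \<bullet> e) \<ge> 0" using ue ve by simp
    ultimately show ?thesis by linarith
  qed
  then have xa: "u \<bullet> x < a" by (simp add: x_def; linarith)
  have "t * (v \<bullet> e) \<ge> \<bar>b\<bar> + 1"
  proof -
    have "t * (v \<bullet> e) = (\<bar>a\<bar> + 1) / (u \<bullet> e) * (v \<bullet> e) + (\<bar>b\<bar> + 1)" using ve by (simp add: t_def field_simps)
    moreover have "(\<bar>a\<bar> + 1) / (u \<bullet> e) * (v \<bullet> e) \<ge> 0" using ue ve by simp
    ultimately show ?thesis by linarith
  qed
  then have xb: "v \<bullet> x < b" by (simp add: x_def; linarith)
  have "Some x \<in> dint (Half u a) \<inter> dint (Half v b)" using xa xb by simp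
  then show False using d by blast
qed

lemma coball_half:
  fixes u :: "real^'n::finite"
  assumes r: "r > 0" and u: "u \<noteq> 0"
  shows "dint (CoBall c r) \<inter> dint (Half u a) \<noteq> {}"
proof -
  have nu: "norm u > 0" using u by simp
  define K where "K = \<bar>u \<bullet> c\<bar> + \<bar>a\<bar> + r * norm u + 1"
  define x where "x = c - (K / (u \<bullet> u)) *\<^sub>R u"
  have uu: "u \<bullet> u = (norm u)\<^sup>2" by (simp add: power2_norm_eq_inner)
  have K: "K > 0" using r nu by (simp add: K_def add_nonneg_pos)
  have "u \<bullet> x = u \<bullet> c - K" using nu by (simp add: x_def inner_diff_right)
  moreover have "u \<bullet> c \<le> \<bar>u \<bullet> c\<bar>" "- a \<le> \<bar>a\<bar>" "0 \<le> r * norm u" using r by auto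
  ultimately have xa: "u \<bullet> x < a" unfolding K_def by linarith
  have "norm (x - c) = K / norm u" using nu K by (simp add: x_def uu power2_eq_square)
  moreover have "K / norm u > r" using nu by (simp add: K_def field_simps)
  ultimately have "dist c x > r" by (simp add: dist_norm norm_minus_commute)
  then have "Some x \<in> dint (CoBall c r) \<inter> dint (Half u a)" using xa by simp
  then show ?thesis by blast
qed

lemma Some_int: "Some ` A \<inter> Some ` B = Some ` (A \<inter> B)" by auto

lemma ball_half:
  fixes u :: "real^'n::finite"
  assumes r: "r > 0" and u: "u \<noteq> 0" and t: "tangent (Ball c r) (Half u a)"
    and d: "dint (Ball c r) \<inter> dint (Half u a) = {}"
  shows "u \<bullet> c - r * norm u = a"
proof -
  have nu: "norm u > 0" using u by simp
  obtain p where "dset (Ball c r) \<inter> dset (Half u a) = {p}" using t by (auto simp: tangent_def)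
  then have "cball c r \<inter> {x. u \<bullet> x \<le> a} \<noteq> {}" by (auto simp: Some_int)
  then obtain y where y: "dist c y \<le> r" "u \<bullet> y \<le> a" by auto
  have "u \<bullet> (y - c) \<ge> - (norm u * norm (y - c))" using norm_cauchy_schwarz[of "-u" "y - c"] by simp
  moreover have "norm (y - c) \<le> r" using y by (simp add: dist_norm norm_minus_commute)
  moreover have "norm u * norm (y - c) \<le> norm u * r" using \<open>norm (y - c) \<le> r\<close> by (rule mult_left_mono) simp
  ultimately have "u \<bullet> (y - c) \<ge> - (norm u * r)" by linarith
  then have le: "u \<bullet> c - r * norm u \<le> a" using y by (simp add: inner_diff_right algebra_simps)
  have ge: "u \<bullet> c - r * norm u \<ge> a"
  proof (rule ccontr)
    assume "\<not> ?thesis"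
    then have lt: "u \<bullet> c - r * norm u < a" by simp
    define e where "e = (u \<bullet> c - a) / norm u"
    define s where "s = (if e < 0 then 0 else (r + e) / 2)"
    have er: "e < r" using lt nu by (simp add: e_def field_simps)
    have s0: "s \<ge> 0" "s < r" using r er by (auto simp: s_def)
    define x where "x = c - (s / norm u) *\<^sub>R u"
    have "dist c x = s" using nu s0 by (simp add: x_def dist_norm)
    then have xb: "dist c x < r" using s0 by simp
    have ux: "u \<bullet> x = u \<bullet> c - s * norm u" using nu
      by (simp add: x_def inner_diff_right power2_norm_eq_inner[symmetric] power2_eq_square)
    have "u \<bullet> c - s * norm u < a"
    proof (cases "e < 0")
      case True then show ?thesis using nu by (simp add: s_def e_def field_simps)
    next
      case False
      then have "s > e" using er by (simp add: s_def)
      then have "s * norm u > e * norm u" using nu by simp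
      then show ?thesis using nu by (simp add: e_def)
    qed
    then have "Some x \<in> dint (Ball c r) \<inter> dint (Half u a)" using xb ux by simp
    then show False using d by blast
  qed
  show ?thesis using le ge by simp
qed

lemma ball_ball_ge:
  fixes c c' :: "real^'n::finite"
  assumes r: "r > 0" "r' > 0" and d: "dint (Ball c r) \<inter> dint (Ball c' r') = {}"
  shows "dist c c' \<ge> r + r'"
proof (rule ccontr)
  assume "\<not> ?thesis"
  then have lt: "dist c c' < r + r'" by simp
  define x where "x = c + (r / (r + r')) *\<^sub>R (c' - c)"
  have "dist c x = r / (r + r') * dist c c'" using r by (simp add: x_def dist_norm norm_minus_commute)
  also have "\<dots> < r / (r + r') * (r + r')" using lt r by (intro mult_strict_left_mono) auto
  finally have x1: "dist c x < r" using r by simp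
  have "c' - x = (1 - r / (r + r')) *\<^sub>R (c' - c)" by (simp add: x_def algebra_simps)
  moreover have "1 - r / (r + r') = r' / (r + r')" using r by (simp add: field_simps)
  ultimately have "c' - x = (r' / (r + r')) *\<^sub>R (c' - c)" by simp
  then have "dist c' x = r' / (r + r') * dist c c'" using r by (simp add: dist_norm norm_minus_commute)
  also have "\<dots> < r' / (r + r') * (r + r')" using lt r by (intro mult_strict_left_mono) auto
  finally have x2: "dist c' x < r'" using r by simp
  have "Some x \<in> dint (Ball c r) \<inter> dint (Ball c' r')" using x1 x2 by simp
  then show False using d by blast
qed

lemma ball_ball:
  fixes c c' :: "real^'n::finite"
  assumes r: "r > 0" "r' > 0" and t: "tangent (Ball c r) (Ball c' r')"
    and d: "dint (Ball c r) \<inter> dint (Ball c' r') = {}"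
  shows "dist c c' = r + r'"
proof -
  obtain p where "dset (Ball c r) \<inter> dset (Ball c' r') = {p}" using t by (auto simp: tangent_def)
  then have "cball c r \<inter> cball c' r' \<noteq> {}" by (auto simp: Some_int)
  then obtain y where y: "dist c y \<le> r" "dist c' y \<le> r'" by auto
  have "dist c c' \<le> r + r'" using dist_triangle[of c c' y] y by (simp add: dist_commute)
  then show ?thesis using ball_ball_ge[OF r d] by simp
qed


lemma tangent_sym: "tangent a b = tangent b a"
  by (simp add: tangent_def Int_commute)

lemma moeb_tangent:
  assumes "f \<in> moebius" "f ` dset b1 = dset b1'" "f ` dset b2 = dset b2'" "tangent b1 b2"
  shows "tangent b1' b2'"
proof -
  obtain p where p: "dset b1 \<inter> dset b2 = {p}" using assms(4) by (auto simp: tangent_def)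
  have "inj f" using moeb_inj[OF assms(1)] .
  then have "dset b1' \<inter> dset b2' = f ` (dset b1 \<inter> dset b2)"
    using assms(2,3) by (simp add: image_Int)
  then show ?thesis using p by (auto simp: tangent_def)
qed

lemma moeb_disj:
  assumes "f \<in> moebius" "f ` dint b1 = dint b1'" "f ` dint b2 = dint b2'" "dint b1 \<inter> dint b2 = {}"
  shows "dint b1' \<inter> dint b2' = {}"
proof -
  have "inj f" using moeb_inj[OF assms(1)] .
  then have "dint b1' \<inter> dint b2' = f ` (dint b1 \<inter> dint b2)"
    using assms(2,3) by (simp add: image_Int)
  then show ?thesis using assms(4) by simp
qed

lemma half_scale:
  assumes "\<mu> > 0"
  shows "dset (Half (\<mu> *\<^sub>R w) b) = dset (Half w (b / \<mu>))" "dint (Half (\<mu> *\<^sub>R w) b) = dint (Half w (b / \<mu>))"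
  using assms by (auto simp: field_simps mult.commute)

lemma normalize:
  fixes b1 b2 :: "'n::finite dball"
  assumes w1: "dball_wf b1" and w2: "dball_wf b2" and t: "tangent b1 b2" and d: "dint b1 \<inter> dint b2 = {}"
  shows "\<exists>f\<in>moebius. \<exists>u a1 a2. u \<noteq> 0 \<and> f ` dset b1 = dset (Half u a1) \<and> f ` dint b1 = dint (Half u a1)
      \<and> f ` dset b2 = dset (Half (-u) a2) \<and> f ` dint b2 = dint (Half (-u) a2)"
proof -
  obtain p where p: "dset b1 \<inter> dset b2 = {p}" using t by (auto simp: tangent_def)
  obtain f0 :: "(real^'n) option \<Rightarrow> (real^'n) option" where f0: "f0 \<in> moebius" "f0 p = None"
  proof (cases p)
    case None then show ?thesis using that[of id] moebius.moeb_id by simp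
  next
    case (Some x) then show ?thesis using that[of "sphere_inversion x 1"] moeb_inv1[of 1 x] by simp
  qed
  obtain b1' where b1': "dball_wf b1'" "f0 ` dset b1 = dset b1'" "f0 ` dint b1 = dint b1'"
    using moeb_ball[OF f0(1) w1] by blast
  obtain b2' where b2': "dball_wf b2'" "f0 ` dset b2 = dset b2'" "f0 ` dint b2 = dint b2'"
    using moeb_ball[OF f0(1) w2] by blast
  have n1: "None \<in> dset b1'" using p f0(2) b1'(2) by (metis IntD1 image_eqI insertI1)
  have n2: "None \<in> dset b2'" using p f0(2) b2'(2) by (metis IntD2 image_eqI insertI1)
  have dd: "dint b1' \<inter> dint b2' = {}" using moeb_disj[OF f0(1) b1'(3) b2'(3) d] .
  show ?thesis
  proof (cases b1')
    case (Ball c r) then show ?thesis using n1 by auto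
  next
    case (CoBall c r)
    show ?thesis
    proof (cases b2')
      case (Ball c' r') then show ?thesis using n2 by auto
    next
      case (CoBall c' r') then show ?thesis using dd \<open>b1' = CoBall c r\<close> by auto
    next
      case (Half v b) then show ?thesis using dd \<open>b1' = CoBall c r\<close> coball_half[of r v c b] b1'(1) b2'(1) by auto
    qed
  next
    case (Half u a)
    have u: "u \<noteq> 0" using b1'(1) Half by simp
    show ?thesis
    proof (cases b2')
      case (Ball c' r') then show ?thesis using n2 by auto
    next
      case (CoBall c' r') then show ?thesis using dd Half coball_half[of r' u c' a] b1'(1) b2'(1) by (auto simp: Int_commute)
    next
      case (Half v b)
      have v: "v \<noteq> 0" using b2'(1) Half by simp
      obtain \<mu> where mu: "\<mu> > 0" "v = - \<mu> *\<^sub>R u" using half_half[OF u v] dd \<open>b1' = Half u a\<close> Half by blast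
      have "v = \<mu> *\<^sub>R (-u)" using mu by simp
      then have e: "dset b2' = dset (Half (-u) (b / \<mu>))" "dint b2' = dint (Half (-u) (b / \<mu>))"
        using half_scale[OF mu(1), of "-u" b] Half by auto
      show ?thesis using f0(1) u b1' b2' e \<open>b1' = Half u a\<close> by metis
    qed
  qed
qed

lemma slab_ball:
  fixes u :: "real^'n::finite"
  assumes u: "u \<noteq> 0" and w: "dball_wf b"
    and t1: "tangent b (Half u a1)" and t2: "tangent b (Half (-u) a2)"
    and d1: "dint b \<inter> dint (Half u a1) = {}" and d2: "dint b \<inter> dint (Half (-u) a2) = {}"
  shows "\<exists>c. b = Ball c (- (a1 + a2) / (2 * norm u)) \<and> u \<bullet> c = (a1 - a2) / 2"
proof (cases b)
  case (Ball c r)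
  have r: "r > 0" using w Ball by simp
  have e1: "u \<bullet> c - r * norm u = a1" using ball_half[OF r u] t1 d1 Ball by simp
  have e2: "(-u) \<bullet> c - r * norm (-u) = a2" using ball_half[OF r, of "-u"] u t2 d2 Ball by simp
  have nu: "norm u > 0" using u by simp
  have "r = - (a1 + a2) / (2 * norm u)" using e1 e2 nu by (simp add: field_simps)
  moreover have "u \<bullet> c = (a1 - a2) / 2" using e1 e2 by simp
  ultimately show ?thesis using Ball by blast
next
  case (CoBall c r)
  then show ?thesis using coball_half[of r u c a1] w d1 u by simp
next
  case (Half w' b')
  have w': "w' \<noteq> 0" using w Half by simp
  obtain \<mu> where mu: "\<mu> > 0" "u = - \<mu> *\<^sub>R w'" using half_half[OF w' u] d1 Half by blast
  have "-u \<noteq> 0" using u by simp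
  from half_half[OF w' this, of b' a2] d2 Half
  obtain \<mu>' where mu': "\<mu>' > 0" "-u = - \<mu>' *\<^sub>R w'" by auto
  have "(\<mu> + \<mu>') *\<^sub>R w' = 0" using mu(2) mu'(2) by (simp add: algebra_simps)
  then show ?thesis using mu mu' w' by simp
qed


lemma completion_unique:
  fixes S :: "'i \<Rightarrow> 'n::finite dball" and X Y Z :: "'n dball"
  assumes fin: "finite F" and cardF: "card F = CARD('n) + 1"
    and wS: "\<forall>i\<in>F. dball_wf (S i)"
    and pS: "\<forall>i\<in>F. \<forall>j\<in>F. i \<noteq> j \<longrightarrow> tangent (S i) (S j) \<and> dint (S i) \<inter> dint (S j) = {}"
    and wX: "dball_wf X" and wY: "dball_wf Y" and wZ: "dball_wf Z"
    and cX: "\<forall>i\<in>F. tangent X (S i) \<and> dint X \<inter> dint (S i) = {}"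
    and cY: "\<forall>i\<in>F. tangent Y (S i) \<and> dint Y \<inter> dint (S i) = {}"
    and cZ: "\<forall>i\<in>F. tangent Z (S i) \<and> dint Z \<inter> dint (S i) = {}"
    and XZ: "dint X \<inter> dint Z = {}" and YZ: "dint Y \<inter> dint Z = {}"
  shows "dset X = dset Y"
proof -
  have "card F \<ge> 2" using cardF by simp
  then have "F \<noteq> {}" by auto
  then obtain i1 where i1: "i1 \<in> F" by blast
  have "card (F - {i1}) \<ge> 1" using \<open>card F \<ge> 2\<close> i1 fin by simp
  then have "F - {i1} \<noteq> {}" by (metis card.empty not_one_le_zero)
  then obtain i2 where i2: "i2 \<in> F" "i2 \<noteq> i1" by blast
  obtain f u a1 a2 where f: "f \<in> moebius" "u \<noteq> 0"
    "f ` dset (S i1) = dset (Half u a1)" "f ` dint (S i1) = dint (Half u a1)"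
    "f ` dset (S i2) = dset (Half (-u) a2)" "f ` dint (S i2) = dint (Half (-u) a2)"
    using normalize[of "S i1" "S i2"] wS pS i1 i2 by metis
  define img where "img b = (SOME b'. dball_wf b' \<and> f ` dset b = dset b' \<and> f ` dint b = dint b')" for b
  have img: "dball_wf (img b) \<and> f ` dset b = dset (img b) \<and> f ` dint b = dint (img b)" if "dball_wf b" for b
    unfolding img_def by (rule someI_ex) (rule moeb_ball[OF f(1) that])
  define \<rho> where "\<rho> = - (a1 + a2) / (2 * norm u)"
  define m where "m = (a1 - a2) / 2"
  define good where "good b \<longleftrightarrow> dball_wf b \<and> tangent b (S i1) \<and> tangent b (S i2) \<and>
     dint b \<inter> dint (S i1) = {} \<and> dint b \<inter> dint (S i2) = {}" for b
  have slab: "\<exists>c. img b = Ball c \<rho> \<and> u \<bullet> c = m" if "good b" for b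
  proof -
    have g: "dball_wf b" "tangent b (S i1)" "tangent b (S i2)" "dint b \<inter> dint (S i1) = {}" "dint b \<inter> dint (S i2) = {}"
      using that by (auto simp: good_def)
    note ib = img[OF g(1)]
    show ?thesis unfolding \<rho>_def m_def
      by (rule slab_ball[OF f(2) conjunct1[OF ib]])
        (use moeb_tangent[OF f(1) conjunct1[OF conjunct2[OF ib]] f(3) g(2)]
             moeb_tangent[OF f(1) conjunct1[OF conjunct2[OF ib]] f(5) g(3)]
             moeb_disj[OF f(1) conjunct2[OF conjunct2[OF ib]] f(4) g(4)]
             moeb_disj[OF f(1) conjunct2[OF conjunct2[OF ib]] f(6) g(5)] in auto)
  qed
  define cen where "cen b = (SOME c. img b = Ball c \<rho> \<and> u \<bullet> c = m)" for b
  have cen: "img b = Ball (cen b) \<rho> \<and> u \<bullet> cen b = m" if "good b" for b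
    unfolding cen_def by (rule someI_ex) (rule slab[OF that])
  have gX: "good X" using wX cX i1 i2 by (simp add: good_def)
  have gY: "good Y" using wY cY i1 i2 by (simp add: good_def)
  have gZ: "good Z" using wZ cZ i1 i2 by (simp add: good_def)
  have \<rho>: "\<rho> > 0" using img[OF wX] cen[OF gX] by simp
  have dist_ge: "dist (cen b) (cen b') \<ge> 2 * \<rho>" if "good b" "good b'" "dint b \<inter> dint b' = {}" for b b'
  proof -
    have "dint (img b) \<inter> dint (img b') = {}"
      using moeb_disj[OF f(1) _ _ that(3)] img that(1,2) by (auto simp: good_def)
    then show ?thesis using ball_ball_ge[OF \<rho> \<rho>] cen[OF that(1)] cen[OF that(2)] by simp
  qed
  have dist_eq: "dist (cen b) (cen b') = 2 * \<rho>" if "good b" "good b'" "dint b \<inter> dint b' = {}" "tangent b b'" for b b'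
  proof -
    have "dint (img b) \<inter> dint (img b') = {}"
      using moeb_disj[OF f(1) _ _ that(3)] img that(1,2) by (auto simp: good_def)
    moreover have "tangent (img b) (img b')"
      using moeb_tangent[OF f(1) _ _ that(4)] img that(1,2) by (auto simp: good_def)
    ultimately show ?thesis using ball_ball[OF \<rho> \<rho>] cen[OF that(1)] cen[OF that(2)] by simp
  qed
  define I where "I = F - {i1, i2}"
  have gI: "good (S i)" if "i \<in> I" for i
    using that wS pS i1 i2 by (auto simp: good_def I_def)
  have cardI: "card I + 1 = CARD('n)" using cardF fin i1 i2 by (simp add: I_def card_Diff_subset)
  have "cen X = cen Y"
  proof (rule vec_unique[of u I \<rho> "\<lambda>i. cen (S i)" m "cen Z"])
    show "u \<noteq> 0" "finite I" "card I + 1 = CARD('n)" "\<rho> > 0" using f(2) fin cardI \<rho> by (auto simp: I_def)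
    show "\<forall>i\<in>I. \<forall>j\<in>I. i \<noteq> j \<longrightarrow> dist (cen (S i)) (cen (S j)) = 2 * \<rho>"
      using dist_eq gI pS by (auto simp: I_def)
    show "\<forall>i\<in>I. u \<bullet> cen (S i) = m" using cen gI by blast
    show "u \<bullet> cen Z = m" "u \<bullet> cen X = m" "u \<bullet> cen Y = m" using cen gX gY gZ by auto
    show "\<forall>i\<in>I. dist (cen Z) (cen (S i)) = 2 * \<rho>" using dist_eq gI gZ cZ by (auto simp: I_def)
    show "\<forall>i\<in>I. dist (cen X) (cen (S i)) = 2 * \<rho>" using dist_eq gI gX cX by (auto simp: I_def)
    show "\<forall>i\<in>I. dist (cen Y) (cen (S i)) = 2 * \<rho>" using dist_eq gI gY cY by (auto simp: I_def)
    show "cen X \<noteq> cen Z" using dist_ge[OF gX gZ XZ] \<rho> by auto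
    show "cen Y \<noteq> cen Z" using dist_ge[OF gY gZ YZ] \<rho> by auto
  qed
  then have "img X = img Y" using cen gX gY by metis
  then have "f ` dset X = f ` dset Y" using img wX wY by metis
  then show ?thesis using moeb_inj[OF f(1)] by (simp add: inj_image_eq_iff)
qed

definition simil :: "((real^'n::finite) option \<Rightarrow> (real^'n) option) \<Rightarrow> real \<Rightarrow> (real^'n \<Rightarrow> real^'n) \<Rightarrow> bool" where
  "simil f s h \<longleftrightarrow> f \<in> moebius \<and> f None = None \<and> (\<forall>x. f (Some x) = Some (h x)) \<and> surj h \<and>
     (\<forall>x y. dist (h x) (h y) = s * dist x y)"

lemma simil_id: "simil id 1 id"
  by (simp add: simil_def moebius.moeb_id)

lemma simil_comp: "simil f s h \<Longrightarrow> simil g t k \<Longrightarrow> simil (g \<circ> f) (t * s) (k \<circ> h)"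
proof -
  assume a: "simil f s h" "simil g t k"
  then have "surj (k \<circ> h)" by (intro comp_surj) (auto simp: simil_def)
  then show ?thesis using a unfolding simil_def by (auto intro: moeb_comp)
qed

lemma simil_homothety:
  assumes k: "k > 0"
  shows "simil (sphere_inversion 0 (sqrt k) \<circ> sphere_inversion 0 1) k (\<lambda>x. k *\<^sub>R x)"
proof -
  have m: "sphere_inversion 0 (sqrt k) \<circ> sphere_inversion 0 1 \<in> moebius"
    using moeb_comp[OF moeb_inv1[of "sqrt k" 0] moeb_inv1[of 1 0]] k by simp
  have pt: "(sphere_inversion 0 (sqrt k) \<circ> sphere_inversion 0 1) (Some x) = Some (k *\<^sub>R x)" for x :: "real^'a"
  proof (cases "x = 0")
    case True then show ?thesis by simp
  next
    case False
    define n where "n = (norm x)\<^sup>2"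
    have n: "n > 0" using False by (simp add: n_def)
    have y0: "(1 / n) *\<^sub>R x \<noteq> 0" using False n by simp
    have ny: "(norm ((1 / n) *\<^sub>R x))\<^sup>2 = 1 / n" using n by (simp add: n_def power2_eq_square field_simps)
    have "(k / (1 / n)) * (1 / n) = k" using n by simp
    then show ?thesis using False y0 ny k by (simp add: n_def[symmetric])
  qed
  have "surj (\<lambda>x::real^'a. k *\<^sub>R x)"
    by (rule surjI[of _ "\<lambda>x. (1/k) *\<^sub>R x"]) (use k in simp)
  moreover have "dist (k *\<^sub>R x) (k *\<^sub>R y) = k * dist x y" for x y :: "real^'a"
    using k by (simp add: dist_norm scaleR_diff_right[symmetric])
  ultimately show ?thesis using m pt k by (simp add: simil_def)
qed

definition bis_h :: "real^'n \<Rightarrow> real^'n \<Rightarrow> real^'n \<Rightarrow> real^'n" where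
  "bis_h p q x = x - (2 * ((p - q) \<bullet> x - (p \<bullet> p - q \<bullet> q) / 2) / ((p - q) \<bullet> (p - q))) *\<^sub>R (p - q)"

lemma bis_h_invol: "p \<noteq> q \<Longrightarrow> bis_h p q (bis_h p q x) = x"
  using refl_invol[of "p - q" "(p \<bullet> p - q \<bullet> q) / 2" "Some x"] by (simp add: bis_h_def)

lemma refl_norm:
  assumes w: "w \<bullet> w \<noteq> 0"
  shows "(z - (2 * (w \<bullet> z) / (w \<bullet> w)) *\<^sub>R w) \<bullet> (z - (2 * (w \<bullet> z) / (w \<bullet> w)) *\<^sub>R w) = z \<bullet> z"
  using w by (simp add: inner_diff_left inner_diff_right inner_commute field_simps power2_eq_square)

lemma bis_dist: "p \<noteq> q \<Longrightarrow> dist (bis_h p q x) (bis_h p q y) = dist x y"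
proof -
  assume pq: "p \<noteq> q"
  define w where "w = p - q"
  have w: "w \<bullet> w \<noteq> 0" using pq by (simp add: w_def)
  define C where "C = (p \<bullet> p - q \<bullet> q) / 2"
  have "bis_h p q x - bis_h p q y = (x - y) - ((2 * (w \<bullet> x - C)) / (w \<bullet> w) - (2 * (w \<bullet> y - C)) / (w \<bullet> w)) *\<^sub>R w"
    unfolding bis_h_def w_def[symmetric] C_def[symmetric] by (simp add: scaleR_diff_left algebra_simps)
  moreover have "(2 * (w \<bullet> x - C)) / (w \<bullet> w) - (2 * (w \<bullet> y - C)) / (w \<bullet> w) = 2 * (w \<bullet> (x - y)) / (w \<bullet> w)"
    by (simp add: diff_divide_distrib[symmetric] inner_diff_right algebra_simps)
  ultimately have "bis_h p q x - bis_h p q y = (x - y) - (2 * (w \<bullet> (x - y)) / (w \<bullet> w)) *\<^sub>R w" by simp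
  then have "(bis_h p q x - bis_h p q y) \<bullet> (bis_h p q x - bis_h p q y) = (x - y) \<bullet> (x - y)"
    using refl_norm[OF w, of "x - y"] by simp
  then show ?thesis by (simp add: dist_norm norm_eq_sqrt_inner)
qed

lemma bis_pq: "p \<noteq> q \<Longrightarrow> bis_h p q p = q"
proof -
  assume pq: "p \<noteq> q"
  have w: "(p - q) \<bullet> (p - q) \<noteq> 0" using pq by simp
  have "2 * ((p - q) \<bullet> p - (p \<bullet> p - q \<bullet> q) / 2) = (p - q) \<bullet> (p - q)"
    by (simp add: inner_diff_left inner_diff_right inner_commute field_simps)
  then show ?thesis using w by (simp add: bis_h_def)
qed

lemma bis_fix: "dist x p = dist x q \<Longrightarrow> bis_h p q x = x"
proof -
  assume "dist x p = dist x q"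
  then have "(x - p) \<bullet> (x - p) = (x - q) \<bullet> (x - q)" by (simp add: dist_norm norm_eq_sqrt_inner)
  then have "(p - q) \<bullet> x - (p \<bullet> p - q \<bullet> q) / 2 = 0"
    by (simp add: inner_diff_left inner_diff_right inner_commute field_simps)
  then show ?thesis by (simp add: bis_h_def)
qed

lemma simil_bis: "p \<noteq> q \<Longrightarrow> simil (hyperplane_reflection (p - q) ((p \<bullet> p - q \<bullet> q) / 2)) 1 (bis_h p q)"
proof -
  assume pq: "p \<noteq> q"
  have "surj (bis_h p q)" by (rule surjI[of _ "bis_h p q"]) (rule bis_h_invol[OF pq])
  moreover have "\<forall>x. hyperplane_reflection (p - q) ((p \<bullet> p - q \<bullet> q) / 2) (Some x) = Some (bis_h p q x)"
    by (simp add: bis_h_def)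
  ultimately show ?thesis using pq unfolding simil_def by (auto simp: moeb_refl1 bis_dist)
qed


lemma iso_match:
  fixes P Q :: "'j \<Rightarrow> real^'n::finite"
  assumes "finite J" "\<forall>i\<in>J. \<forall>j\<in>J. dist (Q i) (Q j) = dist (P i) (P j)"
  shows "\<exists>f h. simil f 1 h \<and> (\<forall>i\<in>J. h (P i) = Q i)"
  using assms
proof (induction J rule: finite_induct)
  case empty then show ?case using simil_id by blast
next
  case (insert j J)
  then obtain f h where fh: "simil f 1 h" "\<forall>i\<in>J. h (P i) = Q i" by auto
  define p' where "p' = h (P j)"
  show ?case
  proof (cases "p' = Q j")
    case True then show ?thesis using fh by (auto simp: p'_def)
  next
    case False
    have s: "simil (hyperplane_reflection (p' - Q j) ((p' \<bullet> p' - Q j \<bullet> Q j) / 2) \<circ> f) 1 (bis_h p' (Q j) \<circ> h)"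
      using simil_comp[OF fh(1) simil_bis[OF False]] by (metis mult_1)
    have "\<forall>i\<in>insert j J. (bis_h p' (Q j) \<circ> h) (P i) = Q i"
    proof
      fix i assume i: "i \<in> insert j J"
      show "(bis_h p' (Q j) \<circ> h) (P i) = Q i"
      proof (cases "i = j")
        case True then show ?thesis using bis_pq[OF False] by (simp add: p'_def)
      next
        case ne: False
        then have iJ: "i \<in> J" using i by simp
        have "dist (Q i) p' = dist (h (P i)) (h (P j))" using fh(2) iJ by (simp add: p'_def)
        also have "\<dots> = dist (P i) (P j)" using fh(1) unfolding simil_def by simp
        also have "\<dots> = dist (Q i) (Q j)" using insert.prems iJ by simp
        finally show ?thesis using bis_fix[of "Q i" p' "Q j"] fh(2) iJ by simp
      qed
    qed
    then show ?thesis using s by blast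
  qed
qed

lemma sim_match:
  fixes P Q :: "'j \<Rightarrow> real^'n::finite"
  assumes k: "k > 0" and "finite J" "\<forall>i\<in>J. \<forall>j\<in>J. dist (Q i) (Q j) = k * dist (P i) (P j)"
  shows "\<exists>f h. simil f k h \<and> (\<forall>i\<in>J. h (P i) = Q i)"
proof -
  note hom = simil_homothety[OF k]
  have d: "\<forall>x y::real^'n. dist (k *\<^sub>R x) (k *\<^sub>R y) = k * dist x y"
    using k by (simp add: dist_norm scaleR_diff_right[symmetric])
  have "\<forall>i\<in>J. \<forall>j\<in>J. dist (Q i) (Q j) = dist (k *\<^sub>R P i) (k *\<^sub>R P j)"
    using assms(3) d by simp
  then obtain g h where gh: "simil g 1 h" "\<forall>i\<in>J. h (k *\<^sub>R P i) = Q i"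
    using iso_match[OF assms(2), of Q "\<lambda>i. k *\<^sub>R P i"] by blast
  have "simil (g \<circ> (sphere_inversion 0 (sqrt k) \<circ> sphere_inversion 0 1)) (1 * k) (h \<circ> (\<lambda>x. k *\<^sub>R x))"
    by (rule simil_comp[OF hom gh(1)])
  then show ?thesis using gh(2) by (intro exI[of _ "g \<circ> (sphere_inversion 0 (sqrt k) \<circ> sphere_inversion 0 1)"]
      exI[of _ "h \<circ> (\<lambda>x. k *\<^sub>R x)"]) auto
qed

lemma polar: "a \<bullet> b = ((norm a)\<^sup>2 + (norm b)\<^sup>2 - (norm (a - b))\<^sup>2) / 2"
  for a b :: "'a::real_inner"
  by (simp add: power2_norm_eq_inner inner_diff_left inner_diff_right inner_commute)

lemma simil_inner:
  assumes "simil f s h"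
  shows "(h x - h p) \<bullet> (h q - h p) = s\<^sup>2 * ((x - p) \<bullet> (q - p))"
proof -
  have d: "\<And>a b. norm (h a - h b) = s * norm (a - b)" using assms by (simp add: simil_def dist_norm)
  have "(h x - h p) \<bullet> (h q - h p) = ((norm (h x - h p))\<^sup>2 + (norm (h q - h p))\<^sup>2 - (norm (h x - h q))\<^sup>2) / 2"
    by (subst polar) simp
  also have "\<dots> = s\<^sup>2 * (((norm (x - p))\<^sup>2 + (norm (q - p))\<^sup>2 - (norm (x - q))\<^sup>2) / 2)"
    by (simp add: d power_mult_distrib algebra_simps)
  also have "\<dots> = s\<^sup>2 * ((x - p) \<bullet> (q - p))"
    using polar[of "x - p" "q - p"] by simp
  finally show ?thesis .
qed

lemma simil_cball:
  assumes "simil f s h" "s > 0"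
  shows "h ` cball c r = cball (h c) (s * r)"
proof
  have d: "\<And>a b. dist (h a) (h b) = s * dist a b" using assms by (simp add: simil_def)
  show "h ` cball c r \<subseteq> cball (h c) (s * r)" using assms(2) by (auto simp: d mult_left_mono)
  show "cball (h c) (s * r) \<subseteq> h ` cball c r"
  proof
    fix y assume y: "y \<in> cball (h c) (s * r)"
    obtain x where x: "y = h x" using assms(1) unfolding simil_def by (metis surjD)
    then have "s * dist c x \<le> s * r" using y by (simp add: d)
    then have "dist c x \<le> r" using assms(2) by simp
    then show "y \<in> h ` cball c r" using x by auto
  qed
qed

lemma simil_HS:
  assumes "simil f s h" "s > 0"
  shows "h ` {y. (y - p) \<bullet> (q - p) \<le> K} = {y. (y - h p) \<bullet> (h q - h p) \<le> s\<^sup>2 * K}"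
    and "h ` {y. (y - p) \<bullet> (q - p) \<ge> K} = {y. (y - h p) \<bullet> (h q - h p) \<ge> s\<^sup>2 * K}"
proof -
  have i: "\<And>x. (h x - h p) \<bullet> (h q - h p) = s\<^sup>2 * ((x - p) \<bullet> (q - p))" using simil_inner[OF assms(1)] .
  have s2: "s\<^sup>2 > 0" using assms(2) by simp
  have su: "\<And>y. \<exists>x. y = h x" using assms(1) unfolding simil_def by (metis surjD)
  show "h ` {y. (y - p) \<bullet> (q - p) \<le> K} = {y. (y - h p) \<bullet> (h q - h p) \<le> s\<^sup>2 * K}"
  proof
    show "h ` {y. (y - p) \<bullet> (q - p) \<le> K} \<subseteq> {y. (y - h p) \<bullet> (h q - h p) \<le> s\<^sup>2 * K}"
      using s2 by (auto simp: i)
    show "{y. (y - h p) \<bullet> (h q - h p) \<le> s\<^sup>2 * K} \<subseteq> h ` {y. (y - p) \<bullet> (q - p) \<le> K}"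
    proof
      fix y assume "y \<in> {y. (y - h p) \<bullet> (h q - h p) \<le> s\<^sup>2 * K}"
      moreover obtain x where x: "y = h x" using su by blast
      ultimately have "(x - p) \<bullet> (q - p) \<le> K" using s2 by (simp add: i)
      then show "y \<in> h ` {y. (y - p) \<bullet> (q - p) \<le> K}" using x by auto
    qed
  qed
  show "h ` {y. (y - p) \<bullet> (q - p) \<ge> K} = {y. (y - h p) \<bullet> (h q - h p) \<ge> s\<^sup>2 * K}"
  proof
    show "h ` {y. (y - p) \<bullet> (q - p) \<ge> K} \<subseteq> {y. (y - h p) \<bullet> (h q - h p) \<ge> s\<^sup>2 * K}"
      using s2 by (auto simp: i)
    show "{y. (y - h p) \<bullet> (h q - h p) \<ge> s\<^sup>2 * K} \<subseteq> h ` {y. (y - p) \<bullet> (q - p) \<ge> K}"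
    proof
      fix y assume "y \<in> {y. (y - h p) \<bullet> (h q - h p) \<ge> s\<^sup>2 * K}"
      moreover obtain x where x: "y = h x" using su by blast
      ultimately have "(x - p) \<bullet> (q - p) \<ge> K" using s2 by (simp add: i)
      then show "y \<in> h ` {y. (y - p) \<bullet> (q - p) \<ge> K}" using x by auto
    qed
  qed
qed

lemma simil_img:
  assumes "simil f s h"
  shows "f ` (Some ` A) = Some ` (h ` A)" "f ` insert None (Some ` A) = insert None (Some ` (h ` A))"
  using assms by (auto simp: simil_def image_image)

lemma normalize_config:
  fixes B :: "'v \<Rightarrow> 'n::finite dball"
  assumes v1: "v1 \<in> V" and v2: "v2 \<in> V" and v12: "v1 \<noteq> v2"
    and wB: "\<forall>v\<in>V. dball_wf (B v)"
    and pB: "\<forall>v\<in>V. \<forall>w\<in>V. v \<noteq> w \<longrightarrow> tangent (B v) (B w) \<and> dint (B v) \<inter> dint (B w) = {}"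
    and ne: "V - {v1, v2} \<noteq> {}"
  obtains f u a1 a2 c where "f \<in> moebius" "u \<noteq> 0" "- (a1 + a2) / (2 * norm u) > 0"
    "f ` dset (B v1) = dset (Half u a1)" "f ` dset (B v2) = dset (Half (-u) a2)"
    "\<forall>v\<in>V - {v1, v2}. f ` dset (B v) = dset (Ball (c v) (- (a1 + a2) / (2 * norm u))) \<and> u \<bullet> c v = (a1 - a2) / 2"
    "\<forall>v\<in>V - {v1, v2}. \<forall>w\<in>V - {v1, v2}. v \<noteq> w \<longrightarrow> dist (c v) (c w) = 2 * (- (a1 + a2) / (2 * norm u))"
proof -
  obtain f u a1 a2 where f: "f \<in> moebius" "u \<noteq> 0"
    "f ` dset (B v1) = dset (Half u a1)" "f ` dint (B v1) = dint (Half u a1)"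
    "f ` dset (B v2) = dset (Half (-u) a2)" "f ` dint (B v2) = dint (Half (-u) a2)"
    using normalize[of "B v1" "B v2"] wB pB v1 v2 v12 by metis
  define img where "img b = (SOME b'. dball_wf b' \<and> f ` dset b = dset b' \<and> f ` dint b = dint b')" for b
  have img: "dball_wf (img b) \<and> f ` dset b = dset (img b) \<and> f ` dint b = dint (img b)" if "dball_wf b" for b
    unfolding img_def by (rule someI_ex) (rule moeb_ball[OF f(1) that])
  define \<rho> where "\<rho> = - (a1 + a2) / (2 * norm u)"
  define m where "m = (a1 - a2) / 2"
  define good where "good b \<longleftrightarrow> dball_wf b \<and> tangent b (B v1) \<and> tangent b (B v2) \<and>
     dint b \<inter> dint (B v1) = {} \<and> dint b \<inter> dint (B v2) = {}" for b
  have slab: "\<exists>c. img b = Ball c \<rho> \<and> u \<bullet> c = m" if "good b" for b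
  proof -
    have g: "dball_wf b" "tangent b (B v1)" "tangent b (B v2)" "dint b \<inter> dint (B v1) = {}" "dint b \<inter> dint (B v2) = {}"
      using that by (auto simp: good_def)
    note ib = img[OF g(1)]
    show ?thesis unfolding \<rho>_def m_def
      by (rule slab_ball[OF f(2) conjunct1[OF ib]])
        (use moeb_tangent[OF f(1) conjunct1[OF conjunct2[OF ib]] f(3) g(2)]
             moeb_tangent[OF f(1) conjunct1[OF conjunct2[OF ib]] f(5) g(3)]
             moeb_disj[OF f(1) conjunct2[OF conjunct2[OF ib]] f(4) g(4)]
             moeb_disj[OF f(1) conjunct2[OF conjunct2[OF ib]] f(6) g(5)] in auto)
  qed
  define cen where "cen b = (SOME c. img b = Ball c \<rho> \<and> u \<bullet> c = m)" for b
  have cen: "img b = Ball (cen b) \<rho> \<and> u \<bullet> cen b = m" if "good b" for b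
    unfolding cen_def by (rule someI_ex) (rule slab[OF that])
  define W where "W = V - {v1, v2}"
  have gW: "good (B v)" if "v \<in> W" for v
    using that wB pB v1 v2 by (auto simp: good_def W_def)
  obtain w0 where w0: "w0 \<in> W" using ne by (auto simp: W_def)
  have \<rho>: "\<rho> > 0" using img[of "B w0"] cen[OF gW[OF w0]] wB w0 by (auto simp: W_def)
  have dist_eq: "dist (cen b) (cen b') = 2 * \<rho>" if "good b" "good b'" "dint b \<inter> dint b' = {}" "tangent b b'" for b b'
  proof -
    have "dint (img b) \<inter> dint (img b') = {}"
      using moeb_disj[OF f(1) _ _ that(3)] img that(1,2) by (auto simp: good_def)
    moreover have "tangent (img b) (img b')"
      using moeb_tangent[OF f(1) _ _ that(4)] img that(1,2) by (auto simp: good_def)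
    ultimately show ?thesis using ball_ball[OF \<rho> \<rho>] cen[OF that(1)] cen[OF that(2)] by simp
  qed
  have A: "\<forall>v\<in>W. f ` dset (B v) = dset (Ball (cen (B v)) \<rho>) \<and> u \<bullet> cen (B v) = m"
  proof
    fix v assume v: "v \<in> W"
    have "f ` dset (B v) = dset (img (B v))" using img[of "B v"] gW[OF v] by (simp add: good_def)
    then show "f ` dset (B v) = dset (Ball (cen (B v)) \<rho>) \<and> u \<bullet> cen (B v) = m" using cen[OF gW[OF v]] by simp
  qed
  have Bd: "\<forall>v\<in>W. \<forall>w\<in>W. v \<noteq> w \<longrightarrow> dist (cen (B v)) (cen (B w)) = 2 * \<rho>"
    using dist_eq gW pB by (auto simp: W_def)
  have A': "\<forall>v\<in>V - {v1, v2}. f ` dset (B v) = dset (Ball (cen (B v)) (- (a1 + a2) / (2 * norm u))) \<and> u \<bullet> cen (B v) = (a1 - a2) / 2"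
    using A unfolding \<rho>_def m_def W_def .
  have Bd': "\<forall>v\<in>V - {v1, v2}. \<forall>w\<in>V - {v1, v2}. v \<noteq> w \<longrightarrow> dist (cen (B v)) (cen (B w)) = 2 * (- (a1 + a2) / (2 * norm u))"
    using Bd unfolding \<rho>_def W_def .
  have \<rho>': "- (a1 + a2) / (2 * norm u) > 0" using \<rho> unfolding \<rho>_def .
  show ?thesis by (rule that[OF f(1) f(2) \<rho>' f(3) f(5) A' Bd'])
qed

lemma half_pts:
  fixes u :: "real^'n::finite"
  assumes u: "u \<noteq> 0" and \<rho>: "\<rho> > 0" and \<rho>d: "\<rho> = - (a1 + a2) / (2 * norm u)" and c0: "u \<bullet> c0 = (a1 - a2) / 2"
  shows "{x. u \<bullet> x \<le> a1} = {y. (y - (c0 - (\<rho> / norm u) *\<^sub>R u)) \<bullet> (c0 - (c0 - (\<rho> / norm u) *\<^sub>R u)) \<le> 0}"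
    and "{x. (-u) \<bullet> x \<le> a2} = {y. (y - (c0 - (\<rho> / norm u) *\<^sub>R u)) \<bullet> (c0 - (c0 - (\<rho> / norm u) *\<^sub>R u)) \<ge> 2 * \<rho>\<^sup>2}"
proof -
  have nu: "norm u > 0" using u by simp
  have k: "\<rho> / norm u > 0" using nu \<rho> by simp
  have uu: "u \<bullet> u = (norm u)\<^sup>2" by (simp add: power2_norm_eq_inner)
  have up: "u \<bullet> (c0 - (\<rho> / norm u) *\<^sub>R u) = a1"
    using nu c0 \<rho>d by (simp add: inner_diff_right uu power2_eq_square field_simps)
  have e: "(y - (c0 - (\<rho> / norm u) *\<^sub>R u)) \<bullet> (c0 - (c0 - (\<rho> / norm u) *\<^sub>R u)) = (\<rho> / norm u) * (u \<bullet> y - a1)" for y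
    using up by (simp add: inner_diff_left inner_commute algebra_simps)
  show "{x. u \<bullet> x \<le> a1} = {y. (y - (c0 - (\<rho> / norm u) *\<^sub>R u)) \<bullet> (c0 - (c0 - (\<rho> / norm u) *\<^sub>R u)) \<le> 0}"
    unfolding e by (rule Collect_cong) (metis pos_mult_le0[OF k] diff_le_0_iff_le)
  have "(\<rho> / norm u) * (u \<bullet> y - a1) \<ge> 2 * \<rho>\<^sup>2 \<longleftrightarrow> u \<bullet> y - a1 \<ge> 2 * \<rho> * norm u" for y
  proof -
    have h: "2 * \<rho>\<^sup>2 = (\<rho> / norm u) * (2 * \<rho> * norm u)" using nu by (simp add: power2_eq_square)
    show ?thesis apply (subst h) by (rule mult_le_cancel_left_pos[OF k])
  qed
  moreover have "2 * \<rho> * norm u = - (a1 + a2)" using \<rho>d nu by simp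
  ultimately show "{x. (-u) \<bullet> x \<le> a2} = {y. (y - (c0 - (\<rho> / norm u) *\<^sub>R u)) \<bullet> (c0 - (c0 - (\<rho> / norm u) *\<^sub>R u)) \<ge> 2 * \<rho>\<^sup>2}"
    unfolding e
  proof -
    assume A: "\<And>y. (\<rho> / norm u * (u \<bullet> y - a1) \<ge> 2 * \<rho>\<^sup>2) = (u \<bullet> y - a1 \<ge> 2 * \<rho> * norm u)"
      and Bq: "2 * \<rho> * norm u = - (a1 + a2)"
    have "(-u) \<bullet> y \<le> a2 \<longleftrightarrow> u \<bullet> y - a1 \<ge> 2 * \<rho> * norm u" for y
      unfolding Bq by (rule iffI; simp; linarith)
    then show "{x. (-u) \<bullet> x \<le> a2} = {y. \<rho> / norm u * (u \<bullet> y - a1) \<ge> 2 * \<rho>\<^sup>2}" using A by blast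
  qed
qed

lemma pstar_dist:
  fixes u :: "real^'n::finite"
  assumes u: "u \<noteq> 0" and ab: "u \<bullet> a = u \<bullet> b" and \<rho>: "\<rho> \<ge> 0"
  shows "dist (a - (\<rho> / norm u) *\<^sub>R u) b = sqrt ((dist a b)\<^sup>2 + \<rho>\<^sup>2)"
proof -
  have nu: "norm u > 0" using u by simp
  have o: "u \<bullet> (a - b) = 0" using ab by (simp add: inner_diff_right)
  have "(dist (a - (\<rho> / norm u) *\<^sub>R u) b)\<^sup>2 = ((a - b) - (\<rho> / norm u) *\<^sub>R u) \<bullet> ((a - b) - (\<rho> / norm u) *\<^sub>R u)"
    by (simp add: dist_sq_inner algebra_simps)
  also have "\<dots> = (a - b) \<bullet> (a - b) + (\<rho> / norm u)\<^sup>2 * (u \<bullet> u)"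
    using o by (simp add: inner_diff_left inner_diff_right inner_commute power2_eq_square)
  also have "\<dots> = (dist a b)\<^sup>2 + \<rho>\<^sup>2"
    using nu by (simp add: dist_sq_inner power2_norm_eq_inner[symmetric] power_divide)
  finally have e2: "(dist (a - (\<rho> / norm u) *\<^sub>R u) b)\<^sup>2 = (dist a b)\<^sup>2 + \<rho>\<^sup>2" .
  show ?thesis using real_sqrt_unique[OF e2] by simp
qed


lemma descartes_equiv:
  fixes B B' :: "'v \<Rightarrow> 'n::finite dball"
  assumes fin: "finite V" and cV: "card V = CARD('n) + 2"
    and wB: "\<forall>v\<in>V. dball_wf (B v)"
    and pB: "\<forall>v\<in>V. \<forall>w\<in>V. v \<noteq> w \<longrightarrow> tangent (B v) (B w) \<and> dint (B v) \<inter> dint (B w) = {}"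
    and wB': "\<forall>v\<in>V. dball_wf (B' v)"
    and pB': "\<forall>v\<in>V. \<forall>w\<in>V. v \<noteq> w \<longrightarrow> tangent (B' v) (B' w) \<and> dint (B' v) \<inter> dint (B' w) = {}"
  shows "\<exists>f\<in>moebius. \<forall>v\<in>V. f ` dset (B v) = dset (B' v)"
proof -
  have "V \<noteq> {}" using cV by auto
  then obtain v1 where v1: "v1 \<in> V" by blast
  have "card (V - {v1}) \<ge> 1" using cV v1 fin by simp
  then have "V - {v1} \<noteq> {}" by (metis card.empty not_one_le_zero)
  then obtain v2 where v2: "v2 \<in> V" "v2 \<noteq> v1" by blast
  define W where "W = V - {v1, v2}"
  have "card W \<ge> 1" using cV v1 v2 fin by (simp add: W_def card_Diff_subset)
  then have Wne: "W \<noteq> {}" by (metis card.empty not_one_le_zero)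
  have v12: "v1 \<noteq> v2" using v2 by simp
  obtain f1 u a1 a2 c where f1: "f1 \<in> moebius" "u \<noteq> 0" "- (a1 + a2) / (2 * norm u) > 0"
    "f1 ` dset (B v1) = dset (Half u a1)" "f1 ` dset (B v2) = dset (Half (-u) a2)"
    "\<forall>v\<in>W. f1 ` dset (B v) = dset (Ball (c v) (- (a1 + a2) / (2 * norm u))) \<and> u \<bullet> c v = (a1 - a2) / 2"
    "\<forall>v\<in>W. \<forall>w\<in>W. v \<noteq> w \<longrightarrow> dist (c v) (c w) = 2 * (- (a1 + a2) / (2 * norm u))"
    by (rule normalize_config[OF v1 v2(1) v12 wB pB Wne[unfolded W_def], folded W_def])
  obtain f2 u' a1' a2' c' where f2: "f2 \<in> moebius" "u' \<noteq> 0" "- (a1' + a2') / (2 * norm u') > 0"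
    "f2 ` dset (B' v1) = dset (Half u' a1')" "f2 ` dset (B' v2) = dset (Half (-u') a2')"
    "\<forall>v\<in>W. f2 ` dset (B' v) = dset (Ball (c' v) (- (a1' + a2') / (2 * norm u'))) \<and> u' \<bullet> c' v = (a1' - a2') / 2"
    "\<forall>v\<in>W. \<forall>w\<in>W. v \<noteq> w \<longrightarrow> dist (c' v) (c' w) = 2 * (- (a1' + a2') / (2 * norm u'))"
    by (rule normalize_config[OF v1 v2(1) v12 wB' pB' Wne[unfolded W_def], folded W_def])
  define \<rho> where "\<rho> = - (a1 + a2) / (2 * norm u)"
  define \<rho>' where "\<rho>' = - (a1' + a2') / (2 * norm u')"
  have \<rho>: "\<rho> > 0" and \<rho>': "\<rho>' > 0" using f1 f2 by (auto simp: \<rho>_def \<rho>'_def)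
  define k where "k = \<rho>' / \<rho>"
  have k: "k > 0" using \<rho> \<rho>' by (simp add: k_def)
  have k\<rho>: "k * \<rho> = \<rho>'" using \<rho> by (simp add: k_def)
  obtain w0 where w0: "w0 \<in> W" using Wne by blast
  define Ps where "Ps = c w0 - (\<rho> / norm u) *\<^sub>R u"
  define Qs where "Qs = c' w0 - (\<rho>' / norm u') *\<^sub>R u'"
  define P where "P i = (case i of None \<Rightarrow> Ps | Some v \<Rightarrow> c v)" for i
  define Q where "Q i = (case i of None \<Rightarrow> Qs | Some v \<Rightarrow> c' v)" for i
  define J where "J = insert None (Some ` W)"
  have dcc: "dist (c' v) (c' w) = k * dist (c v) (c w)" if "v \<in> W" "w \<in> W" for v w
  proof -
    have d1: "\<forall>v\<in>W. \<forall>w\<in>W. v \<noteq> w \<longrightarrow> dist (c v) (c w) = 2 * \<rho>" using f1(7) unfolding \<rho>_def .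
    have d2: "\<forall>v\<in>W. \<forall>w\<in>W. v \<noteq> w \<longrightarrow> dist (c' v) (c' w) = 2 * \<rho>'" using f2(7) unfolding \<rho>'_def .
    show ?thesis
    proof (cases "v = w")
      case True then show ?thesis by simp
    next
      case False then show ?thesis using d1 d2 that k\<rho> by auto
    qed
  qed
  have cw: "\<And>v. v \<in> W \<Longrightarrow> u \<bullet> c v = (a1 - a2) / 2" using f1(6) by blast
  have cw': "\<And>v. v \<in> W \<Longrightarrow> u' \<bullet> c' v = (a1' - a2') / 2" using f2(6) by blast
  have dsc: "dist Qs (c' v) = k * dist Ps (c v)" if "v \<in> W" for v
  proof -
    have "dist Ps (c v) = sqrt ((dist (c w0) (c v))\<^sup>2 + \<rho>\<^sup>2)"
      unfolding Ps_def by (rule pstar_dist) (use f1(2) cw[OF w0] cw[OF that] \<rho> in auto)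
    moreover have "dist Qs (c' v) = sqrt ((dist (c' w0) (c' v))\<^sup>2 + \<rho>'\<^sup>2)"
      unfolding Qs_def by (rule pstar_dist) (use f2(2) cw'[OF w0] cw'[OF that] \<rho>' in auto)
    moreover have "(dist (c' w0) (c' v))\<^sup>2 + \<rho>'\<^sup>2 = k\<^sup>2 * ((dist (c w0) (c v))\<^sup>2 + \<rho>\<^sup>2)"
      using dcc[OF w0 that] k\<rho>[symmetric] by (simp add: power_mult_distrib algebra_simps)
    ultimately show ?thesis using k by (simp add: real_sqrt_mult)
  qed
  have dPQ: "\<forall>i\<in>J. \<forall>j\<in>J. dist (Q i) (Q j) = k * dist (P i) (P j)"
    unfolding J_def P_def Q_def using dcc dsc by (auto simp: dist_commute)
  obtain g h where gh: "simil g k h" "\<forall>i\<in>J. h (P i) = Q i"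
    using sim_match[OF k _ dPQ] fin by (auto simp: J_def W_def)
  have hPs: "h Ps = Qs" and hc: "\<And>v. v \<in> W \<Longrightarrow> h (c v) = c' v"
    using gh(2) by (auto simp: J_def P_def Q_def)
  have c0: "u \<bullet> c w0 = (a1 - a2) / 2" and c0': "u' \<bullet> c' w0 = (a1' - a2') / 2" using f1(6) f2(6) w0 by auto
  note hp = half_pts[OF f1(2) \<rho> \<rho>_def c0] and hp' = half_pts[OF f2(2) \<rho>' \<rho>'_def c0']
  have g1: "g ` dset (Half u a1) = dset (Half u' a1')"
  proof -
    have "g ` dset (Half u a1) = insert None (Some ` (h ` {x. u \<bullet> x \<le> a1}))"
      using simil_img(2)[OF gh(1)] by simp
    also have "h ` {x. u \<bullet> x \<le> a1} = {x. u' \<bullet> x \<le> a1'}"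
      unfolding hp(1) hp'(1) Ps_def[symmetric] Qs_def[symmetric] simil_HS(1)[OF gh(1) k] hPs hc[OF w0] by simp
    finally show ?thesis by simp
  qed
  have g2: "g ` dset (Half (-u) a2) = dset (Half (-u') a2')"
  proof -
    have "g ` dset (Half (-u) a2) = insert None (Some ` (h ` {x. (-u) \<bullet> x \<le> a2}))"
      using simil_img(2)[OF gh(1)] by simp
    also have "h ` {x. (-u) \<bullet> x \<le> a2} = {x. (-u') \<bullet> x \<le> a2'}"
      unfolding hp(2) hp'(2) Ps_def[symmetric] Qs_def[symmetric] simil_HS(2)[OF gh(1) k] hPs hc[OF w0]
      using k\<rho> by (simp add: power_mult_distrib[symmetric] algebra_simps)
    finally show ?thesis by (simp only: dset.simps)
  qed
  have g3: "g ` dset (Ball (c v) \<rho>) = dset (Ball (c' v) \<rho>')" if "v \<in> W" for v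
    using simil_img(1)[OF gh(1)] simil_cball[OF gh(1) k] hc[OF that] k\<rho> by simp
  obtain f2i where f2i: "f2i \<in> moebius" "\<forall>p. f2i (f2 p) = p \<and> f2 (f2i p) = p"
    using moeb_inverse[OF f2(1)] by blast
  have inv: "f2i ` (f2 ` A) = A" for A using f2i(2) by (simp add: image_image)
  have "f2i \<circ> g \<circ> f1 \<in> moebius" using f2i(1) gh(1) f1(1) by (auto simp: simil_def intro: moeb_comp)
  moreover have "\<forall>v\<in>V. (f2i \<circ> g \<circ> f1) ` dset (B v) = dset (B' v)"
  proof
    fix v assume v: "v \<in> V"
    have "(f2i \<circ> g \<circ> f1) ` dset (B v) = f2i ` (g ` (f1 ` dset (B v)))" by (simp add: image_comp)
    moreover consider "v = v1" | "v = v2" | "v \<in> W" using v by (auto simp: W_def)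
    then have "g ` (f1 ` dset (B v)) = f2 ` dset (B' v)"
    proof cases
      case 1 then show ?thesis using f1(4) f2(4) g1 by simp
    next
      case 2 then show ?thesis using f1(5) f2(5) g2 by simp
    next
      case 3
      have e1: "f1 ` dset (B v) = dset (Ball (c v) \<rho>)" using f1(6) 3 unfolding \<rho>_def by blast
      have e2: "f2 ` dset (B' v) = dset (Ball (c' v) \<rho>')" using f2(6) 3 unfolding \<rho>'_def by blast
      show ?thesis unfolding e1 e2 by (rule g3[OF 3])
    qed
    ultimately show "(f2i \<circ> g \<circ> f1) ` dset (B v) = dset (B' v)" using inv by simp
  qed
  ultimately show ?thesis by blast
qed

lemma halfspace_unbounded:
  fixes u :: "real^'n::finite"
  assumes u: "u \<noteq> 0"
  shows "\<not> bounded (- {x. u \<bullet> x \<le> a})"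
proof
  assume "bounded (- {x. u \<bullet> x \<le> a})"
  then obtain M where M: "\<forall>x\<in>- {x. u \<bullet> x \<le> a}. norm x \<le> M" by (auto simp: bounded_iff)
  have nu: "norm u > 0" using u by simp
  define t where "t = (\<bar>a\<bar> + 1) / (u \<bullet> u) + (\<bar>M\<bar> + 1) / norm u"
  have uu: "u \<bullet> u = (norm u)\<^sup>2" by (simp add: power2_norm_eq_inner)
  have t1: "t * (u \<bullet> u) \<ge> \<bar>a\<bar> + 1"
  proof -
    have "t * (u \<bullet> u) = \<bar>a\<bar> + 1 + (\<bar>M\<bar> + 1) * norm u" using nu by (simp add: t_def uu field_simps power2_eq_square)
    moreover have "(\<bar>M\<bar> + 1) * norm u \<ge> 0" by simp
    ultimately show ?thesis by linarith
  qed
  have t2: "t * norm u \<ge> \<bar>M\<bar> + 1"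
  proof -
    have "t * norm u = (\<bar>a\<bar> + 1) / norm u + (\<bar>M\<bar> + 1)" using nu by (simp add: t_def uu field_simps power2_eq_square)
    moreover have "(\<bar>a\<bar> + 1) / norm u \<ge> 0" by simp
    ultimately show ?thesis by linarith
  qed
  have tp: "t \<ge> 0" using nu by (simp add: t_def)
  have "u \<bullet> (t *\<^sub>R u) > a" using t1 by (simp; linarith)
  then have "t *\<^sub>R u \<in> - {x. u \<bullet> x \<le> a}" by simp
  with M have "norm (t *\<^sub>R u) \<le> M" by blast
  moreover have "norm (t *\<^sub>R u) = t * norm u" using tp by simp
  ultimately show False using t2 by linarith
qed

lemma dint_char:
  assumes "dball_wf (b::'n::finite dball)"
  shows "dint b = Some ` interior {x. Some x \<in> dset b} \<union>
     (if None \<in> dset b \<and> bounded (- {x. Some x \<in> dset b}) then {None} else {})"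
proof (cases b)
  case (Ball c r)
  have "{x. Some x \<in> dset b} = cball c r" using Ball by auto
  then show ?thesis using Ball by simp
next
  case (CoBall c r)
  have r: "r > 0" using assms CoBall by simp
  have e: "{x. Some x \<in> dset b} = - ball c r" using CoBall by auto
  have "interior (- ball c r) = - cball c r" using r by (simp add: interior_complement)
  then show ?thesis using CoBall e by auto
next
  case (Half u a)
  have u: "u \<noteq> 0" using assms Half by simp
  have e: "{x. Some x \<in> dset b} = {x. u \<bullet> x \<le> a}" using Half by auto
  show ?thesis using Half e halfspace_unbounded[OF u] u by simp
qed

lemma dint_det: "dball_wf b1 \<Longrightarrow> dball_wf b2 \<Longrightarrow> dset b1 = dset b2 \<Longrightarrow> dint b1 = dint b2"
  by (simp add: dint_char)

lemma dint_nonempty: "dint b \<noteq> {}"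
  if w: "dball_wf b"
proof (cases b)
  case (Ball c r) then show ?thesis using w by auto
next
  case (CoBall c r) then show ?thesis by auto
next
  case (Half u a)
  note \<open>dball_wf b\<close>
  then have u: "u \<bullet> u > 0" using Half by simp
  have "u \<bullet> (((a - 1) / (u \<bullet> u)) *\<^sub>R u) < a" using u by simp
  then have "Some (((a - 1) / (u \<bullet> u)) *\<^sub>R u) \<in> dint b" using Half by simp
  then show ?thesis by blast
qed

lemma packing_inj:
  assumes "packing V B" shows "inj_on B V"
proof (rule inj_onI)
  fix x y assume "x \<in> V" "y \<in> V" "B x = B y"
  then show "x = y" using assms dint_nonempty[of "B x"] unfolding packing_def by (metis Int_absorb)
qed

lemma stacked_inv:
  assumes "stacked_graph d V E Fs"
  shows "finite V \<and> card V \<ge> d + 2 \<and> (\<forall>x y. E x y \<longrightarrow> x \<in> V \<and> y \<in> V) \<and>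
    (\<forall>F\<in>Fs. F \<subseteq> V \<and> card F = d + 1 \<and> (\<forall>x\<in>F. \<forall>y\<in>F. x \<noteq> y \<longrightarrow> E x y) \<and> (\<exists>z\<in>V - F. \<forall>y\<in>F. E z y))"
  using assms
proof (induction rule: stacked_graph.induct)
  case (stack_simplex V)
  have "\<exists>z\<in>V - F. \<forall>y\<in>F. z \<in> V \<and> y \<in> V \<and> z \<noteq> y" if "F \<subseteq> V" "card F = d + 1" for F
  proof -
    have "finite F" using that(1) stack_simplex(1) finite_subset by blast
    then have "card (V - F) = 1" using that stack_simplex by (simp add: card_Diff_subset)
    then obtain z where "z \<in> V - F" by (metis card.empty ex_in_conv zero_neq_one)
    then show ?thesis using that by auto
  qed
  then show ?case using stack_simplex by auto
next
  case (stack_glue V E Fs F w)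
  define E' where "E' = (\<lambda>x y. E x y \<or> (x = w \<and> y \<in> F) \<or> (y = w \<and> x \<in> F))"
  have IH: "finite V" "card V \<ge> d + 2" "\<forall>x y. E x y \<longrightarrow> x \<in> V \<and> y \<in> V"
    "\<forall>F\<in>Fs. F \<subseteq> V \<and> card F = d + 1 \<and> (\<forall>x\<in>F. \<forall>y\<in>F. x \<noteq> y \<longrightarrow> E x y) \<and> (\<exists>z\<in>V - F. \<forall>y\<in>F. E z y)"
    using stack_glue.IH by auto
  have F: "F \<subseteq> V" "card F = d + 1" "\<forall>x\<in>F. \<forall>y\<in>F. x \<noteq> y \<longrightarrow> E x y" using IH(4) stack_glue.hyps(2) by auto
  have wF: "w \<notin> F" using F(1) stack_glue.hyps(3) by auto
  have newF: "G \<subseteq> insert w V \<and> card G = d + 1 \<and> (\<forall>x\<in>G. \<forall>y\<in>G. x \<noteq> y \<longrightarrow> E' x y) \<and> (\<exists>z\<in>insert w V - G. \<forall>y\<in>G. E' z y)"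
    if G: "G = insert w (F - {u})" "u \<in> F" for G u
  proof -
    have finF: "finite F" using F(1) IH(1) finite_subset by blast
    have "card G = d + 1" using G wF finF F(2) by (simp add: card.insert_remove)
    moreover have "G \<subseteq> insert w V" using G F(1) by auto
    moreover have "\<forall>x\<in>G. \<forall>y\<in>G. x \<noteq> y \<longrightarrow> E' x y" using G F(3) by (auto simp: E'_def)
    moreover have "u \<in> insert w V - G" using G wF F(1) by auto
    moreover have "\<forall>y\<in>G. E' u y" using G F(3) by (auto simp: E'_def)
    ultimately show ?thesis by blast
  qed
  have oldF: "G \<subseteq> insert w V \<and> card G = d + 1 \<and> (\<forall>x\<in>G. \<forall>y\<in>G. x \<noteq> y \<longrightarrow> E' x y) \<and> (\<exists>z\<in>insert w V - G. \<forall>y\<in>G. E' z y)"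
    if "G \<in> Fs" for G
  proof -
    have h: "G \<subseteq> V \<and> card G = d + 1 \<and> (\<forall>x\<in>G. \<forall>y\<in>G. x \<noteq> y \<longrightarrow> E x y) \<and> (\<exists>z\<in>V - G. \<forall>y\<in>G. E z y)"
      by (rule bspec[OF IH(4) that])
    have "G \<subseteq> V" using h by (rule conjunct1)
    have "card G = d + 1" using h by (metis conjunct1 conjunct2)
    have "\<forall>x\<in>G. \<forall>y\<in>G. x \<noteq> y \<longrightarrow> E x y" using h by (metis conjunct1 conjunct2)
    have "\<exists>z\<in>V - G. \<forall>y\<in>G. E z y" using h by (metis conjunct2)
    then obtain z where z: "z \<in> V - G" "\<forall>y\<in>G. E z y" by blast
    moreover have "z \<in> insert w V - G" using z by blast
    moreover have "\<forall>y\<in>G. E' z y" using z by (simp add: E'_def)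
    moreover have "\<forall>x\<in>G. \<forall>y\<in>G. x \<noteq> y \<longrightarrow> E' x y" using \<open>\<forall>x\<in>G. \<forall>y\<in>G. x \<noteq> y \<longrightarrow> E x y\<close> by (simp add: E'_def)
    moreover have "G \<subseteq> insert w V" using \<open>G \<subseteq> V\<close> by blast
    ultimately show ?thesis using \<open>card G = d + 1\<close> by blast
  qed
  have c1: "finite (insert w V)" using IH(1) by simp
  have c2: "card (insert w V) \<ge> d + 2" using IH(1,2) stack_glue.hyps(3) by simp
  have c3: "\<forall>x y. E' x y \<longrightarrow> x \<in> insert w V \<and> y \<in> insert w V" using IH(3) F(1) by (auto simp: E'_def)
  have c4: "\<forall>G\<in>(Fs - {F}) \<union> {insert w (F - {u}) | u. u \<in> F}. G \<subseteq> insert w V \<and> card G = d + 1 \<and>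
      (\<forall>x\<in>G. \<forall>y\<in>G. x \<noteq> y \<longrightarrow> E' x y) \<and> (\<exists>z\<in>insert w V - G. \<forall>y\<in>G. E' z y)"
  proof
    fix G assume "G \<in> (Fs - {F}) \<union> {insert w (F - {u}) | u. u \<in> F}"
    then consider "G \<in> Fs" | u where "u \<in> F" "G = insert w (F - {u})" by blast
    then show "G \<subseteq> insert w V \<and> card G = d + 1 \<and>
      (\<forall>x\<in>G. \<forall>y\<in>G. x \<noteq> y \<longrightarrow> E' x y) \<and> (\<exists>z\<in>insert w V - G. \<forall>y\<in>G. E' z y)"
      by cases (use oldF newF in blast)+
  qed
  show ?case using c1 c2 c3 c4 unfolding E'_def by (intro conjI) simp_all
qed

lemma main_ind:
  assumes sg: "stacked_graph d V E Fs" and d: "d = CARD('n::finite)"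
  shows "\<forall>B B' :: 'v \<Rightarrow> 'n dball. packing V B \<and> tangency_graph_is V E B \<longrightarrow>
     apollonian d (B ` V) \<and> (packing V B' \<and> tangency_graph_is V E B' \<longrightarrow> (\<exists>f\<in>moebius. \<forall>v\<in>V. f ` dset (B v) = dset (B' v)))"
  using sg
proof (induction rule: stacked_graph.induct)
  case (stack_simplex V)
  show ?case
  proof (intro allI impI conjI)
    fix B B' :: "'v \<Rightarrow> 'n dball"
    assume hB: "packing V B \<and> tangency_graph_is V (\<lambda>x y. x \<in> V \<and> y \<in> V \<and> x \<noteq> y) B"
    have wB: "\<forall>v\<in>V. dball_wf (B v)" using hB by (simp add: packing_def)
    have pB: "\<forall>v\<in>V. \<forall>u\<in>V. v \<noteq> u \<longrightarrow> tangent (B v) (B u) \<and> dint (B v) \<inter> dint (B u) = {}"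
      using hB by (simp add: packing_def tangency_graph_is_def)
    have inj: "inj_on B V" using hB packing_inj by blast
    have "descartes d (B ` V)"
      unfolding descartes_def
    proof (intro conjI)
      show "finite (B ` V)" using stack_simplex by simp
      show "card (B ` V) = d + 2" using stack_simplex inj by (simp add: card_image)
      show "\<forall>b\<in>B ` V. dball_wf b" using wB by blast
      show "\<forall>b1\<in>B ` V. \<forall>b2\<in>B ` V. b1 \<noteq> b2 \<longrightarrow> tangent b1 b2 \<and> dint b1 \<inter> dint b2 = {}"
      proof (intro ballI impI)
        fix b1 b2 assume "b1 \<in> B ` V" "b2 \<in> B ` V" "b1 \<noteq> b2"
        then obtain x y where "x \<in> V" "y \<in> V" "b1 = B x" "b2 = B y" "x \<noteq> y" by blast
        then show "tangent b1 b2 \<and> dint b1 \<inter> dint b2 = {}" using pB by blast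
      qed
    qed
    then show "apollonian d (B ` V)" by (rule apoll_base)
    assume hB': "packing V B' \<and> tangency_graph_is V (\<lambda>x y. x \<in> V \<and> y \<in> V \<and> x \<noteq> y) B'"
    have wB': "\<forall>v\<in>V. dball_wf (B' v)" using hB' by (simp add: packing_def)
    have pB': "\<forall>v\<in>V. \<forall>u\<in>V. v \<noteq> u \<longrightarrow> tangent (B' v) (B' u) \<and> dint (B' v) \<inter> dint (B' u) = {}"
      using hB' by (simp add: packing_def tangency_graph_is_def)
    show "\<exists>f\<in>moebius. \<forall>v\<in>V. f ` dset (B v) = dset (B' v)"
      by (rule descartes_equiv[OF stack_simplex(1) _ wB pB wB' pB']) (use stack_simplex d in simp)
  qed
next
  case (stack_glue V E Fs F w)
  define E' where "E' = (\<lambda>x y. E x y \<or> (x = w \<and> y \<in> F) \<or> (y = w \<and> x \<in> F))"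
  have inv: "finite V" "F \<subseteq> V" "card F = d + 1" "\<forall>x\<in>F. \<forall>y\<in>F. x \<noteq> y \<longrightarrow> E x y" "\<exists>z\<in>V - F. \<forall>y\<in>F. E z y"
  proof -
    have h: "finite V \<and> card V \<ge> d + 2 \<and> (\<forall>x y. E x y \<longrightarrow> x \<in> V \<and> y \<in> V) \<and>
      (\<forall>F\<in>Fs. F \<subseteq> V \<and> card F = d + 1 \<and> (\<forall>x\<in>F. \<forall>y\<in>F. x \<noteq> y \<longrightarrow> E x y) \<and> (\<exists>z\<in>V - F. \<forall>y\<in>F. E z y))"
      by (rule stacked_inv[OF stack_glue.hyps(1)])
    then show "finite V" by (rule conjunct1)
    have h2: "F \<subseteq> V \<and> card F = d + 1 \<and> (\<forall>x\<in>F. \<forall>y\<in>F. x \<noteq> y \<longrightarrow> E x y) \<and> (\<exists>z\<in>V - F. \<forall>y\<in>F. E z y)"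
      using h stack_glue.hyps(2) by (metis conjunct2)
    show "F \<subseteq> V" using h2 by (rule conjunct1)
    show "card F = d + 1" using h2 by (metis conjunct1 conjunct2)
    show "\<forall>x\<in>F. \<forall>y\<in>F. x \<noteq> y \<longrightarrow> E x y" using h2 by (metis conjunct1 conjunct2)
    show "\<exists>z\<in>V - F. \<forall>y\<in>F. E z y" using h2 by (metis conjunct2)
  qed
  have wV: "w \<notin> V" by (rule stack_glue.hyps(3))
  have restrict: "packing V B \<and> tangency_graph_is V E B"
    if "packing (insert w V) B \<and> tangency_graph_is (insert w V) E' B" for B :: "'v \<Rightarrow> 'n dball"
    using that wV unfolding packing_def tangency_graph_is_def E'_def by auto
  show ?case unfolding E'_def[symmetric]
  proof (intro allI impI conjI)
    fix B B' :: "'v \<Rightarrow> 'n dball"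
    assume hB: "packing (insert w V) B \<and> tangency_graph_is (insert w V) E' B"
    have wB: "\<forall>v\<in>insert w V. dball_wf (B v)" using hB by (simp add: packing_def)
    have dB: "\<forall>v\<in>insert w V. \<forall>u\<in>insert w V. v \<noteq> u \<longrightarrow> dint (B v) \<inter> dint (B u) = {}"
      using hB by (simp add: packing_def)
    have tB: "\<forall>v\<in>insert w V. \<forall>u\<in>insert w V. v \<noteq> u \<longrightarrow> (E' v u \<longleftrightarrow> tangent (B v) (B u))"
      using hB by (simp add: tangency_graph_is_def)
    have inj: "inj_on B (insert w V)" using hB packing_inj by blast
    have IHB: "apollonian d (B ` V) \<and> (packing V B' \<and> tangency_graph_is V E B' \<longrightarrow> (\<exists>f\<in>moebius. \<forall>v\<in>V. f ` dset (B v) = dset (B' v)))" for B'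
      by (rule mp[OF spec[OF spec[OF stack_glue.IH, of B], of B'] restrict[OF hB]])
    have FV: "F \<subseteq> insert w V" using inv(2) by blast
    have wF: "w \<notin> F" using inv(2) wV by blast
    have E'F: "E' x y" if "x \<in> F" "y \<in> F" "x \<noteq> y" for x y using inv(4) that by (simp add: E'_def)
    have E'w: "E' w y" if "y \<in> F" for y using that by (simp add: E'_def)
    show "apollonian d (B ` insert w V)"
    proof -
      have "apollonian d (insert (B w) (B ` V))"
      proof (rule apoll_step[of d "B ` V" "B ` F" "B w"])
        show "apollonian d (B ` V)" using IHB[of B] by (rule conjunct1)
        show "B ` F \<subseteq> B ` V" using inv(2) by blast
        show "card (B ` F) = d + 1" using card_image[OF inj_on_subset[OF inj FV]] inv(3) by simp
        show "\<forall>t1\<in>B ` F. \<forall>t2\<in>B ` F. t1 \<noteq> t2 \<longrightarrow> tangent t1 t2"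
        proof (intro ballI impI)
          fix t1 t2 assume "t1 \<in> B ` F" "t2 \<in> B ` F" "t1 \<noteq> t2"
          then obtain x y where xy: "x \<in> F" "y \<in> F" "t1 = B x" "t2 = B y" "x \<noteq> y" by blast
          have mm: "x \<in> insert w V" "y \<in> insert w V" using xy FV by auto
          have "tangent (B x) (B y)" using tB[rule_format, OF mm(1) mm(2) xy(5)] E'F[OF xy(1,2,5)] by simp
          then show "tangent t1 t2" using xy by simp
        qed
        show "dball_wf (B w)" using wB by simp
        show "B w \<notin> B ` V" using inj wV by auto
        show "\<forall>t\<in>B ` F. tangent (B w) t"
        proof
          fix t assume "t \<in> B ` F"
          then obtain y where y: "y \<in> F" "t = B y" by blast
          have mm: "w \<in> insert w V" "y \<in> insert w V" "w \<noteq> y" using y FV wF by auto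
          have "tangent (B w) (B y)" using tB[rule_format, OF mm(1) mm(2) mm(3)] E'w[OF y(1)] by simp
          then show "tangent (B w) t" using y by simp
        qed
      qed
      then show ?thesis by simp
    qed
    assume hB': "packing (insert w V) B' \<and> tangency_graph_is (insert w V) E' B'"
    have wB': "\<forall>v\<in>insert w V. dball_wf (B' v)" using hB' by (simp add: packing_def)
    have dB': "\<forall>v\<in>insert w V. \<forall>u\<in>insert w V. v \<noteq> u \<longrightarrow> dint (B' v) \<inter> dint (B' u) = {}"
      using hB' by (simp add: packing_def)
    have tB': "\<forall>v\<in>insert w V. \<forall>u\<in>insert w V. v \<noteq> u \<longrightarrow> (E' v u \<longleftrightarrow> tangent (B' v) (B' u))"
      using hB' by (simp add: tangency_graph_is_def)
    have ex: "\<exists>f\<in>moebius. \<forall>v\<in>V. f ` dset (B v) = dset (B' v)"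
      by (rule mp[OF conjunct2[OF IHB[of B']] restrict[OF hB']])
    then obtain f where f: "f \<in> moebius" "\<forall>v\<in>V. f ` dset (B v) = dset (B' v)" by (rule bexE)
    have fint: "f ` dint (B v) = dint (B' v)" if "v \<in> V" for v
    proof -
      have vV: "v \<in> insert w V" using that by simp
      obtain b where b: "dball_wf b" "f ` dset (B v) = dset b" "f ` dint (B v) = dint b"
        using moeb_ball[OF f(1) wB[rule_format, OF vV]] by (elim exE conjE)
      have "dset b = dset (B' v)" using b(2) f(2)[rule_format, OF that] by simp
      then have "dint b = dint (B' v)" by (rule dint_det[OF b(1) wB'[rule_format, OF vV]])
      then show ?thesis using b(3) by simp
    qed
    obtain bw where bw: "dball_wf bw" "f ` dset (B w) = dset bw" "f ` dint (B w) = dint bw"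
      using moeb_ball[OF f(1) wB[rule_format, OF insertI1]] by (elim exE conjE)
    obtain z where z: "z \<in> V - F" "\<forall>y\<in>F. E z y" using inv(5) by blast
    have zw: "z \<noteq> w" using z wV by blast
    have E'z: "E' z y" if "y \<in> F" for y using z that by (simp add: E'_def)
    have "dset bw = dset (B' w)"
    proof (rule completion_unique[of F B' bw "B' w" "B' z"])
      show "finite F" using inv(1,2) finite_subset by blast
      show "card F = CARD('n) + 1" using inv(3) d by simp
      show "\<forall>i\<in>F. dball_wf (B' i)" using wB' FV by blast
      show "\<forall>i\<in>F. \<forall>j\<in>F. i \<noteq> j \<longrightarrow> tangent (B' i) (B' j) \<and> dint (B' i) \<inter> dint (B' j) = {}"
      proof (intro ballI impI)
        fix i j assume ij: "i \<in> F" "j \<in> F" "i \<noteq> j"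
        have mm: "i \<in> insert w V" "j \<in> insert w V" using ij FV by auto
        then show "tangent (B' i) (B' j) \<and> dint (B' i) \<inter> dint (B' j) = {}"
          using tB'[rule_format, OF mm(1) mm(2) ij(3)] E'F[OF ij] dB'[rule_format, OF mm(1) mm(2) ij(3)] by simp
      qed
      show "dball_wf bw" by (rule bw(1))
      show "dball_wf (B' w)" using wB' by simp
      show "dball_wf (B' z)" using wB' z by simp
      show "\<forall>i\<in>F. tangent bw (B' i) \<and> dint bw \<inter> dint (B' i) = {}"
      proof
        fix i assume i: "i \<in> F"
        have iV: "i \<in> V" using i inv(2) by blast
        have iw: "i \<noteq> w" using i wF by blast
        have mm: "w \<in> insert w V" "i \<in> insert w V" using i FV by auto
        have "tangent (B w) (B i)" using tB[rule_format, OF mm(1) mm(2) iw[symmetric]] E'w[OF i] by simp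
        then have "tangent bw (B' i)" using moeb_tangent[OF f(1) bw(2) f(2)[rule_format, OF iV]] by blast
        moreover have "dint bw \<inter> dint (B' i) = {}"
          using moeb_disj[OF f(1) bw(3) fint[OF iV]] dB[rule_format, of w i] iV iw by simp
        ultimately show "tangent bw (B' i) \<and> dint bw \<inter> dint (B' i) = {}" by blast
      qed
      show "\<forall>i\<in>F. tangent (B' w) (B' i) \<and> dint (B' w) \<inter> dint (B' i) = {}"
      proof
        fix i assume i: "i \<in> F"
        have mm: "w \<in> insert w V" "i \<in> insert w V" "w \<noteq> i" using i FV wF by auto
        then show "tangent (B' w) (B' i) \<and> dint (B' w) \<inter> dint (B' i) = {}"
          using tB'[rule_format, OF mm(1) mm(2) mm(3)] E'w[OF i] dB'[rule_format, OF mm(1) mm(2) mm(3)] by simp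
      qed
      show "\<forall>i\<in>F. tangent (B' z) (B' i) \<and> dint (B' z) \<inter> dint (B' i) = {}"
      proof
        fix i assume i: "i \<in> F"
        have "z \<noteq> i" using z i by blast
        moreover have "z \<in> insert w V" "i \<in> insert w V" using z i FV by auto
        ultimately show "tangent (B' z) (B' i) \<and> dint (B' z) \<inter> dint (B' i) = {}"
          using tB'[rule_format, of z i] E'z[OF i] dB'[rule_format, of z i] by simp
      qed
      show "dint bw \<inter> dint (B' z) = {}"
      proof -
        have zV: "z \<in> V" using z by blast
        have "dint (B w) \<inter> dint (B z) = {}" using dB[rule_format, of w z] zV zw by simp
        then show ?thesis using moeb_disj[OF f(1) bw(3) fint[OF zV]] by blast
      qed
      show "dint (B' w) \<inter> dint (B' z) = {}" using dB'[rule_format, of w z] z zw by simp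
    qed
    then have "f ` dset (B w) = dset (B' w)" using bw(2) by simp
    then show "\<exists>f\<in>moebius. \<forall>v\<in>insert w V. f ` dset (B v) = dset (B' v)" using f by blast
  qed
qed

theorem theorem4p1:
  fixes V :: "'v set" and E :: "'v \<Rightarrow> 'v \<Rightarrow> bool"
    and B :: "'v \<Rightarrow> ('n::finite) dball"
  assumes "CARD('n) \<ge> 2"
    and "stacked_polytope_graph (CARD('n)) V E"
    and "packing V B" and "tangency_graph_is V E B"
  shows "apollonian (CARD('n)) (B ` V) \<and>
    (\<forall>B' :: 'v \<Rightarrow> 'n dball. packing V B' \<and> tangency_graph_is V E B' \<longrightarrow>
       (\<exists>f \<in> moebius. \<forall>v\<in>V. f ` dset (B v) = dset (B' v)))"
proof -
  obtain Fs where sg: "stacked_graph (CARD('n)) V E Fs"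
    using assms(2) unfolding stacked_polytope_graph_def by blast
  have m: "\<forall>B B' :: 'v \<Rightarrow> 'n dball. packing V B \<and> tangency_graph_is V E B \<longrightarrow>
     apollonian (CARD('n)) (B ` V) \<and> (packing V B' \<and> tangency_graph_is V E B' \<longrightarrow> (\<exists>f\<in>moebius. \<forall>v\<in>V. f ` dset (B v) = dset (B' v)))"
    by (rule main_ind[OF sg refl])
  have hB: "packing V B \<and> tangency_graph_is V E B" using assms(3,4) by simp
  show ?thesis
  proof
    show "apollonian (CARD('n)) (B ` V)" using mp[OF spec[OF spec[OF m, of B], of B] hB] by (rule conjunct1)
    show "\<forall>B' :: 'v \<Rightarrow> 'n dball. packing V B' \<and> tangency_graph_is V E B' \<longrightarrow>
       (\<exists>f \<in> moebius. \<forall>v\<in>V. f ` dset (B v) = dset (B' v))"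
    proof (intro allI impI)
      fix B' :: "'v \<Rightarrow> 'n dball"
      assume "packing V B' \<and> tangency_graph_is V E B'"
      then show "\<exists>f \<in> moebius. \<forall>v\<in>V. f ` dset (B v) = dset (B' v)"
        using mp[OF conjunct2[OF mp[OF spec[OF spec[OF m, of B], of B'] hB]]] by blast
    qed
  qed
qed

end
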